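(* Let $n\ge m\ge1$, let $X_1,\dots,X_n$ be strings of length $\ell_x$ and $Y_1,\dots,Y_m$ strings of length $\ell_y$ over an alphabet $\Sigma$. Let $\sigma,\rho,\mu\notin\Sigma$ be new symbols, $\kappa_1:=4(\ell_x+\ell_y)$, $\kappa_2:=2\kappa_1+\ell_x$, and $G(S):=\sigma^{\kappa_1}S\rho^{\kappa_1}$. Define $$X:=G(X_1)\,\mu^{\kappa_2}\,G(X_2)\,\mu^{\kappa_2}\cdots\mu^{\kappa_2}\,G(X_n),\qquad Y:=\mu^{n\kappa_2}\,G(Y_1)\,\mu^{\kappa_2}\,G(Y_2)\cdots\mu^{\kappa_2}\,G(Y_m)\,\mu^{n\kappa_2}.$$ Then, with $C:=2n\kappa_2$, $$\min_{\Lambda\in\mathbf\Lambda_{n,m}}\mathrm{cost}(\Lambda)\ \le\ \delta(X,Y)-C\ \le\ \min_{\Lambda\in\mathcal S_{n,m}}\mathrm{cost}(\Lambda).$$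
   Context: For strings $U,V$, $L(U,V)$ is the length of a longest common subsequence and $\delta(U,V):=|U|+|V|-2L(U,V)$. An alignment (w.r.t. $n\ge m$) is a set $\Lambda=\{(i_1,j_1),\dots,(i_k,j_k)\}$ with $0\le k\le m$, $1\le i_1<\dots<i_k\le n$ and $1\le j_1<\dots<j_k\le m$; $\mathbf\Lambda_{n,m}$ is the set of all alignments. A structured alignment is one of the form $\{(\Delta+1,1),\dots,(\Delta+m,m)\}$ with $0\le\Delta\le n-m$; $\mathcal S_{n,m}$ is the set of these. With $\gamma:=\max_{i,j}\delta(X_i,Y_j)$, the cost of $\Lambda=\{(i_1,j_1),\dots,(i_{|\Lambda|},j_{|\Lambda|})\}$ is $\mathrm{cost}(\Lambda):=\sum_{k=1}^{|\Lambda|}\delta(X_{i_k},Y_{j_k})+(m-|\Lambda|)\gamma$ if $|\Lambda|<m$, and $\sum_{k=1}^{m}\delta(X_{i_k},Y_{j_k})+(i_m-i_1-m+1)\gamma$ if $|\Lambda|=m$. *)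

theory Defs
  imports Main "HOL-Library.Sublist"
begin

definition LCS :: "'a list \<Rightarrow> 'a list \<Rightarrow> nat" where
  "LCS U V = Max {length w | w. subseq w U \<and> subseq w V}"

definition lcs_dist :: "'a list \<Rightarrow> 'a list \<Rightarrow> nat" where
  "lcs_dist U V = length U + length V - 2 * LCS U V"

definition alignments :: "nat \<Rightarrow> nat \<Rightarrow> (nat \<times> nat) set set" where
  "alignments n m = {set (zip is js) | is js.
      length is = length js \<and> length is \<le> m \<and>
      sorted_wrt (<) is \<and> sorted_wrt (<) js \<and>
      set is \<subseteq> {1..n} \<and> set js \<subseteq> {1..m}}"

definition structured_alignments :: "nat \<Rightarrow> nat \<Rightarrow> (nat \<times> nat) set set" where
  "structured_alignments n m = {{(\<Delta> + k, k) | k. k \<in> {1..m}} | \<Delta>. \<Delta> \<le> n - m}"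

definition gamma :: "(nat \<Rightarrow> 'a list) \<Rightarrow> (nat \<Rightarrow> 'a list) \<Rightarrow> nat \<Rightarrow> nat \<Rightarrow> nat" where
  "gamma Xs Ys n m = Max {lcs_dist (Xs i) (Ys j) | i j. i \<in> {1..n} \<and> j \<in> {1..m}}"

definition align_cost ::
  "(nat \<Rightarrow> 'a list) \<Rightarrow> (nat \<Rightarrow> 'a list) \<Rightarrow> nat \<Rightarrow> nat \<Rightarrow> (nat \<times> nat) set \<Rightarrow> nat" where
  "align_cost Xs Ys n m \<Lambda> =
     (\<Sum>(i,j)\<in>\<Lambda>. lcs_dist (Xs i) (Ys j)) +
     (if card \<Lambda> < m then (m - card \<Lambda>) * gamma Xs Ys n m
      else (Max (fst ` \<Lambda>) + 1 - Min (fst ` \<Lambda>) - m) * gamma Xs Ys n m)"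

definition Gpad :: "'a \<Rightarrow> 'a \<Rightarrow> nat \<Rightarrow> 'a list \<Rightarrow> 'a list" where
  "Gpad \<sigma> \<rho> k S = replicate k \<sigma> @ S @ replicate k \<rho>"

definition build_X :: "'a \<Rightarrow> 'a \<Rightarrow> 'a \<Rightarrow> nat \<Rightarrow> nat \<Rightarrow> (nat \<Rightarrow> 'a list) \<Rightarrow> nat \<Rightarrow> 'a list" where
  "build_X \<sigma> \<rho> \<mu> k1 k2 Xs n =
     Gpad \<sigma> \<rho> k1 (Xs 1) @ concat (map (\<lambda>i. replicate k2 \<mu> @ Gpad \<sigma> \<rho> k1 (Xs i)) [2..<n+1])"

definition build_Y :: "'a \<Rightarrow> 'a \<Rightarrow> 'a \<Rightarrow> nat \<Rightarrow> nat \<Rightarrow> (nat \<Rightarrow> 'a list) \<Rightarrow> nat \<Rightarrow> nat \<Rightarrow> 'a list" where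
  "build_Y \<sigma> \<rho> \<mu> k1 k2 Ys n m =
     replicate (n * k2) \<mu> @ Gpad \<sigma> \<rho> k1 (Ys 1) @
     concat (map (\<lambda>j. replicate k2 \<mu> @ Gpad \<sigma> \<rho> k1 (Ys j)) [2..<m+1]) @
     replicate (n * k2) \<mu>"

end

theory Submission
  imports Defs
begin


lemma LCS_set_finite: "finite {length w | w. subseq w U \<and> subseq w V}"
proof -
  have "{length w | w. subseq w U \<and> subseq w V} \<subseteq> {0..length U}"
    by (auto dest: list_emb_length)
  thus ?thesis by (rule finite_subset) simp
qed

lemma LCS_ge: "subseq w U \<Longrightarrow> subseq w V \<Longrightarrow> length w \<le> LCS U V"
  unfolding LCS_def by (rule Max_ge[OF LCS_set_finite]) blast

lemma LCS_witness: "\<exists>w. subseq w U \<and> subseq w V \<and> length w = LCS U V"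
proof -
  have "LCS U V \<in> {length w | w. subseq w U \<and> subseq w V}"
    unfolding LCS_def by (rule Max_in[OF LCS_set_finite]) (auto intro: exI[of _ "[]"])
  thus ?thesis by auto
qed

lemma LCS_le1: "LCS U V \<le> length U"
  using LCS_witness[of U V] by (auto dest: list_emb_length)

lemma LCS_le2: "LCS U V \<le> length V"
  using LCS_witness[of U V] by (auto dest: list_emb_length)

lemma LCS_mono2: assumes "subseq V V'" shows "LCS U V \<le> LCS U V'"
proof -
  obtain w where w: "subseq w U" "subseq w V" "length w = LCS U V" using LCS_witness by blast
  have "subseq w V'" using subseq_order.order_trans[OF w(2) assms] .
  from LCS_ge[OF w(1) this] w(3) show ?thesis by simp
qed

lemma LCS_mono1: assumes "subseq U U'" shows "LCS U V \<le> LCS U' V"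
proof -
  obtain w where w: "subseq w U" "subseq w V" "length w = LCS U V" using LCS_witness by blast
  have "subseq w U'" using subseq_order.order_trans[OF w(1) assms] .
  from LCS_ge[OF this w(2)] w(3) show ?thesis by simp
qed

lemma LCS_append_ge: "LCS A C + LCS B D \<le> LCS (A @ B) (C @ D)"
proof -
  obtain w1 where w1: "subseq w1 A" "subseq w1 C" "length w1 = LCS A C" using LCS_witness by blast
  obtain w2 where w2: "subseq w2 B" "subseq w2 D" "length w2 = LCS B D" using LCS_witness by blast
  have "length (w1 @ w2) \<le> LCS (A @ B) (C @ D)"
    by (rule LCS_ge) (rule list_emb_append_mono; fact)+
  thus ?thesis using w1 w2 by simp
qed

lemma LCS_split: "\<exists>i\<le>length C. LCS (A @ B) C = LCS A (take i C) + LCS B (drop i C)"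
proof -
  obtain w where w: "subseq w (A @ B)" "subseq w C" "length w = LCS (A @ B) C" using LCS_witness by blast
  then obtain w1 w2 where ww: "w = w1 @ w2" "subseq w1 A" "subseq w2 B"
    by (auto elim: subseq_appendE)
  from w(2) ww(1) obtain us vs where uv: "C = us @ vs" "subseq w1 us" "subseq w2 vs"
    using list_emb_appendD by blast
  define i where "i = length us"
  have tk: "take i C = us" "drop i C = vs" using uv(1) i_def by auto
  have le: "LCS (A @ B) C \<le> LCS A (take i C) + LCS B (drop i C)"
    using LCS_ge[OF ww(2) uv(2)] LCS_ge[OF ww(3) uv(3)] w(3) ww(1) tk by simp
  have ge: "LCS A (take i C) + LCS B (drop i C) \<le> LCS (A @ B) C"
    using LCS_append_ge[of A "take i C" B "drop i C"] by simp
  show ?thesis using le ge uv(1) i_def by (intro exI[of _ i]) auto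
qed

lemma subseq_set: "subseq w A \<Longrightarrow> set w \<subseteq> set A"
  by (induct rule: list_emb.induct) auto

lemma subseq_filter_length: "subseq w v \<Longrightarrow> length (filter P w) \<le> length (filter P v)"
  by (metis list_emb_length subseq_filter)

lemma LCS_le_filter_count:
  assumes "set A \<subseteq> {x. P x}"
  shows "LCS A C \<le> length (filter P C)"
proof -
  obtain w where w: "subseq w A" "subseq w C" "length w = LCS A C" using LCS_witness by blast
  have "set w \<subseteq> {x. P x}" using subseq_set[OF w(1)] assms by blast
  then have "filter P w = w" by (auto simp: filter_id_conv)
  thus ?thesis using subseq_filter_length[OF w(2), of P] w(3) by simp
qed

lemma LCS_filter_right:
  assumes "set A \<subseteq> {x. P x}"
  shows "LCS A C \<le> LCS A (filter P C)"
proof -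
  obtain w where w: "subseq w A" "subseq w C" "length w = LCS A C" using LCS_witness by blast
  have "set w \<subseteq> {x. P x}" using subseq_set[OF w(1)] assms by blast
  then have "filter P w = w" by (auto simp: filter_id_conv)
  then have "subseq w (filter P C)" using subseq_filter[OF w(2), of P] by simp
  thus ?thesis using LCS_ge[OF w(1)] w(3) by simp
qed

lemma LCS_Gpad_le:
  assumes "\<sigma> \<notin> set A" "\<sigma> \<notin> set B" "\<rho> \<notin> set A" "\<rho> \<notin> set B" "\<sigma> \<noteq> \<rho>"
  shows "LCS (Gpad \<sigma> \<rho> k A) (Gpad \<sigma> \<rho> k B) \<le> 2 * k + LCS A B"
proof -
  let ?GA = "Gpad \<sigma> \<rho> k A" and ?GB = "Gpad \<sigma> \<rho> k B"
  obtain w where w: "subseq w ?GA" "subseq w ?GB" "length w = LCS ?GA ?GB" using LCS_witness by blast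
  let ?P = "\<lambda>x. x \<noteq> \<sigma> \<and> x \<noteq> \<rho>"
  have fA: "filter ?P ?GA = A" using assms(1,3) unfolding Gpad_def
    by (auto simp: filter_replicate intro!: filter_True)
  have fB: "filter ?P ?GB = B" using assms(2,4) unfolding Gpad_def
    by (auto simp: filter_replicate intro!: filter_True)
  have 1: "length (filter ?P w) \<le> LCS A B"
    using LCS_ge[OF subseq_filter[OF w(1), of ?P] subseq_filter[OF w(2), of ?P]] fA fB by simp
  have fs: "filter (\<lambda>x. x = \<sigma>) ?GA = replicate k \<sigma>" using assms(1,5) unfolding Gpad_def
    by (auto simp: filter_replicate filter_empty_conv)
  have fr: "filter (\<lambda>x. x = \<rho>) ?GA = replicate k \<rho>" using assms(3,5) unfolding Gpad_def
    by (auto simp: filter_replicate filter_empty_conv)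
  have 2: "length (filter (\<lambda>x. x = \<sigma>) w) \<le> k"
    using subseq_filter_length[OF w(1), of "\<lambda>x. x = \<sigma>"] fs by simp
  have 3: "length (filter (\<lambda>x. x = \<rho>) w) \<le> k"
    using subseq_filter_length[OF w(1), of "\<lambda>x. x = \<rho>"] fr by simp
  have sp: "length w = length (filter ?P w) + length (filter (\<lambda>x. x = \<sigma>) w) + length (filter (\<lambda>x. x = \<rho>) w)"
  proof -
    have a: "length (filter ?P w) + length (filter (\<lambda>x. \<not> ?P x) w) = length w"
      by (rule sum_length_filter_compl)
    have b: "filter (\<lambda>x. \<not> ?P x) w = filter (\<lambda>x. x = \<sigma> \<or> x = \<rho>) w" by (rule filter_cong) auto
    have c: "length (filter (\<lambda>x. x = \<sigma> \<or> x = \<rho>) w) = length (filter (\<lambda>x. x = \<sigma>) w) + length (filter (\<lambda>x. x = \<rho>) w)"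
      using assms(5) by (induct w) auto
    show ?thesis using a b c by simp
  qed
  show ?thesis using 1 2 3 sp w(3) by simp
qed

lemma LCS_Gpad_ge: "2 * k + LCS A B \<le> LCS (Gpad \<sigma> \<rho> k A) (Gpad \<sigma> \<rho> k B)"
proof -
  obtain w where w: "subseq w A" "subseq w B" "length w = LCS A B" using LCS_witness by blast
  have "subseq (replicate k \<sigma> @ w @ replicate k \<rho>) (replicate k \<sigma> @ A @ replicate k \<rho>)"
    by (rule list_emb_append_mono, rule list_emb_refl, simp, rule list_emb_append_mono, rule w(1), rule list_emb_refl, simp)
  moreover have "subseq (replicate k \<sigma> @ w @ replicate k \<rho>) (replicate k \<sigma> @ B @ replicate k \<rho>)"
    by (rule list_emb_append_mono, rule list_emb_refl, simp, rule list_emb_append_mono, rule w(2), rule list_emb_refl, simp)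
  ultimately have "length (replicate k \<sigma> @ w @ replicate k \<rho>) \<le> LCS (Gpad \<sigma> \<rho> k A) (Gpad \<sigma> \<rho> k B)"
    unfolding Gpad_def by (rule LCS_ge)
  thus ?thesis using w by simp
qed




lemma LCS_concat_split:
  "\<exists>c. mono c \<and> c 0 = 0 \<and> (\<forall>k. Suc r \<le> k \<longrightarrow> c k = length C) \<and>
     LCS (concat (map p [0..<Suc r])) C = (\<Sum>k<Suc r. LCS (p k) (drop (c k) (take (c (Suc k)) C)))"
proof (induction r arbitrary: C)
  case 0
  define c where "c = (\<lambda>k::nat. if k = 0 then 0 else length C)"
  have "mono c" unfolding c_def by (auto simp: mono_def)
  thus ?case by (intro exI[of _ c]) (auto simp: c_def)
next
  case (Suc r)
  have eq: "concat (map p [0..<Suc (Suc r)]) = concat (map p [0..<Suc r]) @ p (Suc r)" by simp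
  obtain i where i0: "i \<le> length C"
    "LCS (concat (map p [0..<Suc r]) @ p (Suc r)) C = LCS (concat (map p [0..<Suc r])) (take i C) + LCS (p (Suc r)) (drop i C)"
    using LCS_split[where A="concat (map p [0..<Suc r])" and B="p (Suc r)" and C=C] by blast
  have i: "i \<le> length C"
    "LCS (concat (map p [0..<Suc (Suc r)])) C = LCS (concat (map p [0..<Suc r])) (take i C) + LCS (p (Suc r)) (drop i C)"
    using i0 unfolding eq by auto
  obtain c' where c': "mono c'" "c' 0 = 0" "\<forall>k. Suc r \<le> k \<longrightarrow> c' k = length (take i C)"
    "LCS (concat (map p [0..<Suc r])) (take i C) = (\<Sum>k<Suc r. LCS (p k) (drop (c' k) (take (c' (Suc k)) (take i C))))"
    using Suc.IH[of "take i C"] by blast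
  have c'i: "\<And>k. Suc r \<le> k \<Longrightarrow> c' k = i" using c'(3) i(1) by simp
  have c'le: "\<And>k. c' k \<le> i"
  proof -
    fix k
    have "c' k \<le> c' (max k (Suc r))" using c'(1) by (auto simp: mono_def)
    thus "c' k \<le> i" using c'i[of "max k (Suc r)"] by simp
  qed
  define c where "c = (\<lambda>k. if k \<le> Suc r then c' k else length C)"
  have mc: "mono c" unfolding c_def mono_def
  proof (intro allI impI)
    fix x y :: nat assume "x \<le> y"
    thus "(if x \<le> Suc r then c' x else length C) \<le> (if y \<le> Suc r then c' y else length C)"
      using c'(1) c'le[of x] i(1) by (auto simp: mono_def)
  qed
  have sum_eq: "(\<Sum>k<Suc r. LCS (p k) (drop (c' k) (take (c' (Suc k)) (take i C))))
      = (\<Sum>k<Suc r. LCS (p k) (drop (c k) (take (c (Suc k)) C)))"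
  proof (rule sum.cong[OF refl])
    fix k assume "k \<in> {..<Suc r}"
    hence "k \<le> Suc r" "Suc k \<le> Suc r" by auto
    moreover have "take (c' (Suc k)) (take i C) = take (c' (Suc k)) C" using c'le[of "Suc k"] by (simp add: min_def)
    ultimately show "LCS (p k) (drop (c' k) (take (c' (Suc k)) (take i C))) = LCS (p k) (drop (c k) (take (c (Suc k)) C))"
      by (simp add: c_def)
  qed
  have last: "drop (c (Suc r)) (take (c (Suc (Suc r))) C) = drop i C"
    using c'i[of "Suc r"] by (simp add: c_def)
  show ?case
  proof (intro exI[of _ c] conjI)
    show "mono c" by (rule mc)
    show "c 0 = 0" using c'(2) by (simp add: c_def)
    show "\<forall>k. Suc (Suc r) \<le> k \<longrightarrow> c k = length C" by (simp add: c_def)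
    show "LCS (concat (map p [0..<Suc (Suc r)])) C = (\<Sum>k<Suc (Suc r). LCS (p k) (drop (c k) (take (c (Suc k)) C)))"
    proof -
      have "LCS (concat (map p [0..<Suc (Suc r)])) C = (\<Sum>k<Suc r. LCS (p k) (drop (c k) (take (c (Suc k)) C))) + LCS (p (Suc r)) (drop i C)"
        using i(2) c'(4) sum_eq by simp
      also have "\<dots> = (\<Sum>k<Suc (Suc r). LCS (p k) (drop (c k) (take (c (Suc k)) C)))"
        using last by simp
      finally show ?thesis .
    qed
  qed
qed

lemma LCS_concat_ge:
  "(\<Sum>k<r. LCS (f k) (g k)) \<le> LCS (concat (map f [0..<r])) (concat (map g [0..<r]))"
proof (induction r)
  case 0 show ?case by simp
next
  case (Suc r)
  have "(\<Sum>k<Suc r. LCS (f k) (g k)) = (\<Sum>k<r. LCS (f k) (g k)) + LCS (f r) (g r)" by simp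
  also have "\<dots> \<le> LCS (concat (map f [0..<r])) (concat (map g [0..<r])) + LCS (f r) (g r)" using Suc by simp
  also have "\<dots> \<le> LCS (concat (map f [0..<r]) @ f r) (concat (map g [0..<r]) @ g r)" by (rule LCS_append_ge)
  finally show ?case by simp
qed

lemma sum_parity_split':
  fixes F :: "nat \<Rightarrow> 'b::comm_monoid_add"
  shows "(\<Sum>k<2*n+1. F k) = (\<Sum>t<Suc n. F (2*t)) + (\<Sum>t<n. F (2*t+1))"
proof (induction n)
  case 0 show ?case by simp
next
  case (Suc n)
  have e: "2 * Suc n + 1 = Suc (Suc (2*n+1))" by simp
  show ?case unfolding e using Suc by (simp add: algebra_simps)
qed

lemma sum_parity_split:
  fixes F :: "nat \<Rightarrow> 'b::comm_monoid_add" and n :: nat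
  assumes "1 \<le> n"
  shows "(\<Sum>k<2*n-1. F k) = (\<Sum>t<n. F (2*t)) + (\<Sum>t<n-1. F (2*t+1))"
proof -
  obtain n' where n: "n = Suc n'" using assms by (cases n) auto
  have "2*n-1 = 2*n'+1" using n by simp
  thus ?thesis using sum_parity_split'[of F n'] n by simp
qed

lemma concat_alt_form':
  "f 1 @ concat (map (\<lambda>i. S @ f i) [2..<n+2]) =
         concat (map (\<lambda>k. if even k then f (k div 2 + 1) else S) [0..<2*n+1])"
proof (induction n)
  case 0 show ?case by simp
next
  case (Suc n)
  have u1: "[2..<Suc n+2] = [2..<n+2] @ [n+2]" by simp
  have u2: "[0..<2*Suc n+1] = [0..<2*n+1] @ [2*n+1, 2*n+2]" by simp
  have "(2*n+2) div 2 + 1 = n + 2" by simp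
  then show ?case unfolding u1 u2 using Suc.IH by simp
qed

lemma concat_alt_form:
  assumes "1 \<le> n"
  shows "f 1 @ concat (map (\<lambda>i. S @ f i) [2..<n+1]) =
         concat (map (\<lambda>k. if even k then f (k div 2 + 1) else S) [0..<2*n-1])"
proof -
  obtain n' where n: "n = Suc n'" using assms by (cases n) auto
  have "2*n-1 = 2*n'+1" "n + 1 = n' + 2" using n by simp_all
  thus ?thesis using concat_alt_form'[of f S n'] by simp
qed




locale red =
  fixes \<Sigma> :: "'a set" and Xs Ys :: "nat \<Rightarrow> 'a list" and \<sigma> \<rho> \<mu> :: 'a and n m lx ly :: nat
  assumes m1: "1 \<le> m" and mn: "m \<le> n"
    and Xlen: "\<And>i. i \<in> {1..n} \<Longrightarrow> length (Xs i) = lx \<and> set (Xs i) \<subseteq> \<Sigma>"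
    and Ylen: "\<And>j. j \<in> {1..m} \<Longrightarrow> length (Ys j) = ly \<and> set (Ys j) \<subseteq> \<Sigma>"
    and sS: "\<sigma> \<notin> \<Sigma>" and rS: "\<rho> \<notin> \<Sigma>" and mS: "\<mu> \<notin> \<Sigma>"
    and sr: "\<sigma> \<noteq> \<rho>" and sm: "\<sigma> \<noteq> \<mu>" and rm: "\<rho> \<noteq> \<mu>"
    and pos: "0 < lx + ly"
begin

definition k1 where "k1 = 4*(lx+ly)"
definition K where "K = 2*k1 + lx"
definition b where "b = 2*k1 + ly"
definition s where "s j = n*K + j*(b+K)"
definition inR where "inR q \<longleftrightarrow> (\<exists>j<m. s j \<le> q \<and> q < s j + b)"
definition gi where "gi q = (q - n*K) div (b+K)"
definition yf where "yf q = (if inR q then Gpad \<sigma> \<rho> k1 (Ys (gi q + 1)) ! (q - s (gi q)) else \<mu>)"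
definition N where "N = s (m-1) + b + n*K"
definition GX where "GX t = Gpad \<sigma> \<rho> k1 (Xs (t+1))"
definition GY where "GY j = Gpad \<sigma> \<rho> k1 (Ys (j+1))"
definition px where "px k = (if even k then GX (k div 2) else replicate K \<mu>)"
definition py where "py k = (if even k then GY (k div 2) else replicate K \<mu>)"

lemma bpos: "0 < b" and Kpos: "0 < K" and k1pos: "0 < k1"
  using pos by (auto simp: b_def K_def k1_def)

lemma s_mono: "j \<le> j' \<Longrightarrow> s j \<le> s j'"
  unfolding s_def by (simp add: mult_le_mono1)

lemma s_gap: assumes "j < j'" shows "s j + b + K \<le> s j'"
proof -
  have "(j+1)*(b+K) \<le> j'*(b+K)" using assms by (intro mult_le_mono1) simp
  thus ?thesis unfolding s_def by (simp add: algebra_simps)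
qed

lemma s_Suc: "s (Suc j) = s j + b + K"
  unfolding s_def by (simp add: algebra_simps)

lemma gi_at: assumes "i < b + K" shows "gi (s j + i) = j"
proof -
  have ne: "b + K \<noteq> 0" using bpos by simp
  have "s j + i - n*K = i + j*(b+K)" unfolding s_def by simp
  hence "gi (s j + i) = j + i div (b+K)" unfolding gi_def using div_mult_self1[OF ne, of i j] by simp
  thus ?thesis using assms by simp
qed

lemma inR_at: "j < m \<Longrightarrow> i < b \<Longrightarrow> inR (s j + i)"
  unfolding inR_def by (intro exI[of _ j]) auto

lemma inR_E:
  assumes "inR q" obtains j i where "j < m" "i < b" "q = s j + i"
  using assms unfolding inR_def by (metis add_diff_inverse_nat less_diff_conv2 not_less add.commute)

lemma GY_len: "j < m \<Longrightarrow> length (GY j) = b"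
  unfolding GY_def Gpad_def b_def using Ylen[of "j+1"] by auto

lemma GX_len: "t < n \<Longrightarrow> length (GX t) = K"
  unfolding GX_def Gpad_def K_def using Xlen[of "t+1"] by auto

lemma GY_set: "j < m \<Longrightarrow> set (GY j) \<subseteq> insert \<sigma> (insert \<rho> \<Sigma>)"
  unfolding GY_def Gpad_def using Ylen[of "j+1"] by (auto split: if_splits)

lemma GX_set: "t < n \<Longrightarrow> set (GX t) \<subseteq> insert \<sigma> (insert \<rho> \<Sigma>)"
  unfolding GX_def Gpad_def using Xlen[of "t+1"] by (auto split: if_splits)

lemma mu_notin_GX: "t < n \<Longrightarrow> \<mu> \<notin> set (GX t)"
  using GX_set[of t] mS sm rm by auto

lemma mu_notin_GY: "j < m \<Longrightarrow> \<mu> \<notin> set (GY j)"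
  using GY_set[of j] mS sm rm by auto

lemma yf_at: assumes "j < m" "i < b" shows "yf (s j + i) = GY j ! i"
proof -
  have "gi (s j + i) = j" using assms by (intro gi_at) simp
  thus ?thesis unfolding yf_def GY_def using inR_at[OF assms] by simp
qed

lemma yf_mu_iff: "yf q = \<mu> \<longleftrightarrow> \<not> inR q"
proof
  assume "yf q = \<mu>"
  show "\<not> inR q"
  proof
    assume "inR q"
    then obtain j i where ji: "j < m" "i < b" "q = s j + i" by (rule inR_E)
    have "yf q \<in> set (GY j)" using yf_at[OF ji(1,2)] ji GY_len[OF ji(1)] by simp
    thus False using \<open>yf q = \<mu>\<close> mu_notin_GY[OF ji(1)] by simp
  qed
qed (simp add: yf_def)

lemma map_block: assumes "j < m" shows "map yf [s j..<s j + b] = GY j"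
proof (rule nth_equalityI)
  show "length (map yf [s j..<s j + b]) = length (GY j)" using GY_len[OF assms] by simp
  fix i assume "i < length (map yf [s j..<s j + b])"
  hence i: "i < b" by simp
  thus "map yf [s j..<s j + b] ! i = GY j ! i" using yf_at[OF assms i] by (simp add: add.commute)
qed

lemma map_mu: assumes "\<And>q. x \<le> q \<Longrightarrow> q < y \<Longrightarrow> \<not> inR q"
  shows "map yf [x..<y] = replicate (y - x) \<mu>"
proof (rule nth_equalityI)
  show "length (map yf [x..<y]) = length (replicate (y - x) \<mu>)" by simp
  fix i assume "i < length (map yf [x..<y])"
  hence "x + i < y" by simp
  thus "map yf [x..<y] ! i = replicate (y - x) \<mu> ! i"
    using assms[of "x+i"] by (simp add: yf_def)
qed

lemma not_inR_gap: assumes "s j + b \<le> q" "q < s (Suc j)" shows "\<not> inR q"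
proof
  assume "inR q"
  then obtain j' i where ji: "j' < m" "i < b" "q = s j' + i" by (rule inR_E)
  show False
  proof (cases "j' \<le> j")
    case True thus False using s_mono[OF True] ji assms by simp
  next
    case False hence "Suc j \<le> j'" by simp
    hence "s (Suc j) \<le> s j'" by (rule s_mono)
    thus False using ji assms by simp
  qed
qed

lemma not_inR_before: "q < n*K \<Longrightarrow> \<not> inR q"
  unfolding inR_def s_def by auto

lemma not_inR_after: assumes "s (m-1) + b \<le> q" shows "\<not> inR q"
proof
  assume "inR q"
  then obtain j' i where ji: "j' < m" "i < b" "q = s j' + i" by (rule inR_E)
  have "s j' \<le> s (m-1)" using ji by (intro s_mono) simp
  thus False using ji assms by simp
qed

definition off where "off k = n*K + (k div 2)*(b+K) + (k mod 2)*b"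

lemma off_even: "off (2*j) = s j" unfolding off_def s_def by simp
lemma off_odd: "off (2*j+1) = s j + b" unfolding off_def s_def by simp

lemma py_block: assumes "k < 2*m - 1" shows "py k = map yf [off k..<off (Suc k)]"
proof (cases "even k")
  case True
  then obtain j where j: "k = 2*j" by blast
  have jm: "j < m" using assms j by simp
  have "off (Suc k) = s j + b" using off_odd[of j] j by simp
  thus ?thesis using map_block[OF jm] j off_even[of j] by (simp add: py_def)
next
  case False
  then obtain j where j: "k = 2*j+1" using oddE by blast
  have "off (Suc k) = s (Suc j)" using off_even[of "Suc j"] j by simp
  moreover have "off k = s j + b" using off_odd j by simp
  moreover have "s (Suc j) - (s j + b) = K" using s_Suc[of j] by simp
  ultimately show ?thesis using map_mu[of "s j + b" "s (Suc j)"] not_inR_gap[of j] False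
    by (simp add: py_def)
qed

lemma concat_py: "r \<le> 2*m - 1 \<Longrightarrow> concat (map py [0..<r]) = map yf [off 0..<off r]"
proof (induction r)
  case 0 show ?case by simp
next
  case (Suc r)
  have le: "off r \<le> off (Suc r)"
  proof (cases "even r")
    case True then obtain j where "r = 2*j" by blast
    thus ?thesis using off_even[of j] off_odd[of j] by simp
  next
    case False then obtain j where "r = 2*j+1" using oddE by blast
    thus ?thesis using off_even[of "Suc j"] off_odd[of j] s_Suc[of j] by simp
  qed
  have le0: "off 0 \<le> off r" unfolding off_def by simp
  have "map yf [off 0..<off (Suc r)] = map yf [off 0..<off r] @ map yf [off r..<off (Suc r)]"
    using le le0 upt_add_eq_append[of "off 0" "off r" "off (Suc r) - off r"] by simp
  thus ?case using Suc py_block[of r] by simp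
qed

end



context red begin

lemma n1: "1 \<le> n" using m1 mn by simp

lemma X_form: "build_X \<sigma> \<rho> \<mu> k1 K Xs n = concat (map px [0..<2*n-1])"
proof -
  have "build_X \<sigma> \<rho> \<mu> k1 K Xs n = concat (map (\<lambda>k. if even k then Gpad \<sigma> \<rho> k1 (Xs (k div 2 + 1)) else replicate K \<mu>) [0..<2*n-1])"
    unfolding build_X_def by (rule concat_alt_form[OF n1])
  also have "(\<lambda>k. if even k then Gpad \<sigma> \<rho> k1 (Xs (k div 2 + 1)) else replicate K \<mu>) = px"
    by (rule ext) (simp add: px_def GX_def)
  finally show ?thesis .
qed

lemma Y_form: "build_Y \<sigma> \<rho> \<mu> k1 K Ys n m = replicate (n*K) \<mu> @ concat (map py [0..<2*m-1]) @ replicate (n*K) \<mu>"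
proof -
  have "Gpad \<sigma> \<rho> k1 (Ys 1) @ concat (map (\<lambda>j. replicate K \<mu> @ Gpad \<sigma> \<rho> k1 (Ys j)) [2..<m+1])
      = concat (map (\<lambda>k. if even k then Gpad \<sigma> \<rho> k1 (Ys (k div 2 + 1)) else replicate K \<mu>) [0..<2*m-1])"
    by (rule concat_alt_form[OF m1])
  also have "(\<lambda>k. if even k then Gpad \<sigma> \<rho> k1 (Ys (k div 2 + 1)) else replicate K \<mu>) = py"
    by (rule ext) (simp add: py_def GY_def)
  finally show ?thesis unfolding build_Y_def by simp
qed

lemma off_last: "off (2*m-1) = s (m-1) + b"
proof -
  have "2*m-1 = 2*(m-1)+1" using m1 by simp
  thus ?thesis using off_odd[of "m-1"] by simp
qed

lemma Y_map: "build_Y \<sigma> \<rho> \<mu> k1 K Ys n m = map yf [0..<N]"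
proof -
  have a: "replicate (n*K) \<mu> = map yf [0..<n*K]"
    using map_mu[of 0 "n*K"] not_inR_before by simp
  have b0: "off 0 = n*K" unfolding off_def by simp
  have bb: "concat (map py [0..<2*m-1]) = map yf [n*K..<s (m-1) + b]"
    using concat_py[of "2*m-1"] b0 off_last by simp
  have c: "replicate (n*K) \<mu> = map yf [s (m-1) + b..<N]"
    using map_mu[of "s (m-1) + b" N] not_inR_after unfolding N_def by simp
  have le1: "n*K \<le> s (m-1) + b" unfolding s_def by simp
  have "[0..<N] = [0..<n*K] @ [n*K..<s (m-1) + b] @ [s (m-1) + b..<N]"
  proof -
    have "[0..<N] = [0..<s (m-1) + b] @ [s (m-1) + b..<N]"
      using upt_add_eq_append[of 0 "s (m-1) + b" "n*K"] unfolding N_def by simp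
    moreover have "[0..<s (m-1) + b] = [0..<n*K] @ [n*K..<s (m-1) + b]"
      using upt_add_eq_append[of 0 "n*K" "s (m-1) + b - n*K"] le1 by simp
    ultimately show ?thesis by simp
  qed
  thus ?thesis unfolding Y_form using a bb c by simp
qed

lemma N_eq: "N = 2*n*K + m*b + (m-1)*K"
proof -
  have "s (m-1) = n*K + (m-1)*(b+K)" by (simp add: s_def)
  moreover have "(m-1)*(b+K) + b = m*b + (m-1)*K" using m1
    by (cases m) (auto simp: algebra_simps)
  ultimately show ?thesis unfolding N_def by simp
qed

lemma length_X: "length (concat (map px [0..<2*n-1])) = (2*n-1)*K"
proof -
  have "length (concat (map px [0..<r])) = r*K" if "r \<le> 2*n-1" for r
    using that
  proof (induction r)
    case 0 show ?case by simp
  next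
    case (Suc r)
    have "length (px r) = K"
    proof (cases "even r")
      case True then obtain t where t: "r = 2*t" by blast
      hence "t < n" using Suc.prems by simp
      thus ?thesis using GX_len t by (simp add: px_def)
    qed (simp add: px_def)
    thus ?case using Suc by simp
  qed
  thus ?thesis by simp
qed

definition NMc where "NMc x y = card {q. x \<le> q \<and> q < y \<and> inR q}"
definition MUc where "MUc x y = card {q. x \<le> q \<and> q < y \<and> \<not> inR q}"

lemma len_filter_upt: "length (filter P [x..<y]) = card {q. x \<le> q \<and> q < y \<and> P q}"
proof -
  have "length (filter P [x..<y]) = card (set (filter P [x..<y]))"
    by (rule distinct_card[symmetric]) simp
  also have "set (filter P [x..<y]) = {q. x \<le> q \<and> q < y \<and> P q}" by auto
  finally show ?thesis .
qed

lemma filter_nonmu: "filter (\<lambda>z. z \<noteq> \<mu>) (map yf [x..<y]) = map yf (filter inR [x..<y])"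
proof -
  have "filter (\<lambda>z. z \<noteq> \<mu>) (map yf [x..<y]) = map yf (filter ((\<lambda>z. z \<noteq> \<mu>) \<circ> yf) [x..<y])"
    by (simp add: filter_map)
  also have "filter ((\<lambda>z. z \<noteq> \<mu>) \<circ> yf) [x..<y] = filter inR [x..<y]"
    by (rule filter_cong) (auto simp: yf_mu_iff)
  finally show ?thesis .
qed

lemma len_nonmu: "length (filter (\<lambda>z. z \<noteq> \<mu>) (map yf [x..<y])) = NMc x y"
  unfolding filter_nonmu NMc_def by (simp add: len_filter_upt)

lemma len_mu: "length (filter (\<lambda>z. z = \<mu>) (map yf [x..<y])) = MUc x y"
proof -
  have "filter (\<lambda>z. z = \<mu>) (map yf [x..<y]) = map yf (filter ((\<lambda>z. z = \<mu>) \<circ> yf) [x..<y])"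
    by (simp add: filter_map)
  also have "filter ((\<lambda>z. z = \<mu>) \<circ> yf) [x..<y] = filter (\<lambda>q. \<not> inR q) [x..<y]"
    by (rule filter_cong) (auto simp: yf_mu_iff)
  finally show ?thesis unfolding MUc_def by (simp add: len_filter_upt)
qed

lemma g_le_NM: "t < n \<Longrightarrow> LCS (GX t) (map yf [x..<y]) \<le> NMc x y"
  using LCS_le_filter_count[of "GX t" "\<lambda>z. z \<noteq> \<mu>" "map yf [x..<y]"] mu_notin_GX[of t] len_nonmu
  by auto

lemma g_le_K: "t < n \<Longrightarrow> LCS (GX t) C \<le> K"
  using LCS_le1[of "GX t" C] GX_len[of t] by simp

lemma h_le_MU: "LCS (replicate K \<mu>) (map yf [x..<y]) \<le> MUc x y"
proof -
  have "set (replicate K \<mu>) \<subseteq> {z. z = \<mu>}" by auto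
  from LCS_le_filter_count[OF this, of "map yf [x..<y]"] show ?thesis using len_mu[of x y] by simp
qed

lemma h_le_K: "LCS (replicate K \<mu>) C \<le> K"
  using LCS_le1[of "replicate K \<mu>" C] by simp

definition LL where "LL t j = LCS (Xs (t+1)) (Ys (j+1))"

lemma g_aligned:
  assumes t: "t < n" and j: "j < m" and only: "\<And>q. x \<le> q \<Longrightarrow> q < y \<Longrightarrow> inR q \<Longrightarrow> s j \<le> q \<and> q < s j + b"
  shows "LCS (GX t) (map yf [x..<y]) \<le> 2*k1 + LL t j"
proof -
  have "LCS (GX t) (map yf [x..<y]) \<le> LCS (GX t) (filter (\<lambda>z. z \<noteq> \<mu>) (map yf [x..<y]))"
    using LCS_filter_right[of "GX t" "\<lambda>z. z \<noteq> \<mu>"] mu_notin_GX[OF t] by auto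
  also have "\<dots> = LCS (GX t) (map yf (filter inR [x..<y]))" by (simp add: filter_nonmu)
  also have "\<dots> \<le> LCS (GX t) (map yf [s j..<s j + b])"
  proof (rule LCS_mono2, rule subseq_map, rule sorted_subset_imp_subseq)
    show "set (filter inR [x..<y]) \<subseteq> set [s j..<s j + b]" using only by auto
    show "sorted_wrt (<) (filter inR [x..<y])" by (rule sorted_wrt_filter) simp
    show "sorted_wrt (\<le>) [s j..<s j + b]" by (simp add: sorted_wrt_iff_nth_less)
  qed
  also have "\<dots> = LCS (GX t) (GY j)" using map_block[OF j] by simp
  also have "\<dots> \<le> 2*k1 + LL t j"
    unfolding GX_def GY_def LL_def
    using Xlen[of "t+1"] Ylen[of "j+1"] t j sS rS sr
    by (intro LCS_Gpad_le) auto
  finally show ?thesis .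
qed

end



lemma sum_split_at:
  fixes f :: "nat \<Rightarrow> 'b::comm_monoid_add"
  assumes "u0 \<le> u" shows "(\<Sum>t<u. f t) = (\<Sum>t<u0. f t) + (\<Sum>t\<in>{u0..<u}. f t)"
proof -
  have "{..<u} = {..<u0} \<union> {u0..<u}" using assms by auto
  moreover have "{..<u0} \<inter> {u0..<u} = {}" by auto
  ultimately show ?thesis by (simp add: sum.union_disjoint)
qed

context red begin

lemma K_le: "K \<le> 4*k1" unfolding K_def k1_def by simp
lemma b_le: "b \<le> K + 2*k1" unfolding K_def b_def k1_def by simp

context
  fixes c :: "nat \<Rightarrow> nat"
  assumes cmono: "mono c"
begin

definition a where "a t = c (2*t)"
definition e where "e t = c (2*t+1)"
definition gg where "gg t = LCS (GX t) (map yf [a t..<e t])"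
definition hh where "hh t = LCS (replicate K \<mu>) (map yf [e t..<a (Suc t)])"
definition meets where "meets t j \<longleftrightarrow> (\<exists>q. a t \<le> q \<and> q < e t \<and> s j \<le> q \<and> q < s j + b)"
definition Lam where "Lam = {(t,j). t < n \<and> j < m \<and> meets t j \<and> (\<forall>j'<m. meets t j' \<longrightarrow> j' = j) \<and> (\<forall>t'<n. meets t' j \<longrightarrow> t' = t)}"
definition Inside where "Inside u \<longleftrightarrow> (\<exists>j<m. s j < e u \<and> a (Suc u) < s j + b)"

lemma cm: "x \<le> y \<Longrightarrow> c x \<le> c y" using cmono by (simp add: mono_def)

lemma ae: "a t \<le> e t" unfolding a_def e_def by (rule cm) simp
lemma ea: "t < t' \<Longrightarrow> e t \<le> a t'" unfolding a_def e_def by (rule cm) simp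
lemma ee: "t \<le> t' \<Longrightarrow> e t \<le> e t'" unfolding e_def by (rule cm) simp
lemma aa: "t \<le> t' \<Longrightarrow> a t \<le> a t'" unfolding a_def by (rule cm) simp

lemma Lam_fin: "finite Lam"
proof -
  have "Lam \<subseteq> {..<n} \<times> {..<m}" unfolding Lam_def by auto
  thus ?thesis by (rule finite_subset) simp
qed

lemma meets_mono: assumes "meets t j" "meets t' j'" "t < t'" shows "j \<le> j'"
proof (rule ccontr)
  assume "\<not> j \<le> j'" hence "j' < j" by simp
  from s_gap[OF this] have g: "s j' + b + K \<le> s j" .
  from assms(1) obtain q where q: "a t \<le> q" "q < e t" "s j \<le> q" "q < s j + b" unfolding meets_def by blast
  from assms(2) obtain q' where q': "a t' \<le> q'" "q' < e t'" "s j' \<le> q'" "q' < s j' + b" unfolding meets_def by blast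
  have "e t \<le> a t'" by (rule ea[OF assms(3)])
  thus False using q q' g by simp
qed

lemma inR_meets: assumes "a t \<le> q" "q < e t" "inR q" obtains j where "j < m" "meets t j" "s j \<le> q" "q < s j + b"
proof -
  from assms(3) obtain j i where ji: "j < m" "i < b" "q = s j + i" by (rule inR_E)
  have mt: "meets t j" unfolding meets_def using assms(1,2) ji by (intro exI[of _ q]) auto
  show ?thesis by (rule that[OF ji(1) mt]) (use ji in auto)
qed

lemma gg_K: "t < n \<Longrightarrow> gg t \<le> K" unfolding gg_def by (rule g_le_K)
lemma gg_NM: "t < n \<Longrightarrow> gg t \<le> NMc (a t) (e t)" unfolding gg_def by (rule g_le_NM)
lemma hh_K: "hh t \<le> K" unfolding hh_def by (rule h_le_K)
lemma hh_MU: "hh t \<le> MUc (e t) (a (Suc t))" unfolding hh_def by (rule h_le_MU)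

lemma gg_aligned: assumes "(t,j) \<in> Lam" shows "gg t \<le> 2*k1 + LL t j"
  unfolding gg_def
proof (rule g_aligned)
  show "t < n" "j < m" using assms unfolding Lam_def by auto
  fix q assume q: "a t \<le> q" "q < e t" "inR q"
  then obtain j' where j': "j' < m" "meets t j'" "s j' \<le> q" "q < s j' + b" by (rule inR_meets)
  hence "j' = j" using assms unfolding Lam_def by auto
  thus "s j \<le> q \<and> q < s j + b" using j' by simp
qed

lemma gg_zero: assumes "t < n" "\<And>j. j < m \<Longrightarrow> \<not> meets t j" shows "gg t = 0"
proof -
  have "{q. a t \<le> q \<and> q < e t \<and> inR q} = {}"
  proof (rule ccontr)
    assume "{q. a t \<le> q \<and> q < e t \<and> inR q} \<noteq> {}"
    then obtain q where "a t \<le> q" "q < e t" "inR q" by blast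
    then obtain j where "j < m" "meets t j" by (rule inR_meets)
    thus False using assms(2) by blast
  qed
  hence "NMc (a t) (e t) = 0" unfolding NMc_def by simp
  thus ?thesis using gg_NM[OF assms(1)] by simp
qed

lemma inside_hh: assumes "Inside u" shows "hh u = 0"
proof -
  from assms obtain j where j: "j < m" "s j < e u" "a (Suc u) < s j + b" unfolding Inside_def by blast
  have "{q. e u \<le> q \<and> q < a (Suc u) \<and> \<not> inR q} = {}"
  proof (rule ccontr)
    assume "{q. e u \<le> q \<and> q < a (Suc u) \<and> \<not> inR q} \<noteq> {}"
    then obtain q where q: "e u \<le> q" "q < a (Suc u)" "\<not> inR q" by blast
    have "inR q" unfolding inR_def using j q by (intro exI[of _ j]) auto
    thus False using q by simp
  qed
  hence "MUc (e u) (a (Suc u)) = 0" unfolding MUc_def by simp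
  thus ?thesis using hh_MU[of u] by simp
qed


end
end



context red begin
context
  fixes c :: "nat \<Rightarrow> nat"
  assumes cmono: "mono c"
begin

lemma run_bound:
  assumes uu: "u0 < u" "u \<le> n"
    and bd0: "u0 = 0 \<or> \<not> Inside c (u0 - 1)"
    and bd1: "u = n \<or> \<not> Inside c (u - 1)"
  shows "(\<Sum>t\<in>{u0..<u}. gg c t) \<le> (u - u0 - 1)*K
     + 2*k1*card {j. j<m \<and> (u0 = 0 \<or> e c (u0-1) \<le> s j) \<and> s j < e c (u-1)}
     + (\<Sum>p\<in>{p\<in>Lam c. u0 \<le> fst p \<and> fst p < u}. LL (fst p) (snd p))"
proof -
  define Qr where "Qr = {j. j<m \<and> (u0 = 0 \<or> e c (u0-1) \<le> s j) \<and> s j < e c (u-1)}"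
  define Q where "Q = {j. j<m \<and> (\<exists>t. u0 \<le> t \<and> t < u \<and> meets c t j)}"
  define SL where "SL = (\<Sum>p\<in>{p\<in>Lam c. u0 \<le> fst p \<and> fst p < u}. LL (fst p) (snd p))"
  have finQr: "finite Qr" unfolding Qr_def by simp
  have finQ: "finite Q" unfolding Q_def by simp
  have QQr: "Q \<subseteq> Qr"
  proof
    fix j assume "j \<in> Q"
    then obtain t where t: "j < m" "u0 \<le> t" "t < u" "meets c t j" unfolding Q_def by blast
    then obtain q where q: "a c t \<le> q" "q < e c t" "s j \<le> q" "q < s j + b" unfolding meets_def[OF cmono] by blast
    have "e c t \<le> e c (u-1)" using t by (intro ee[OF cmono]) simp
    hence 1: "s j < e c (u-1)" using q by simp
    have 2: "u0 = 0 \<or> e c (u0-1) \<le> s j"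
    proof (rule ccontr)
      assume "\<not> (u0 = 0 \<or> e c (u0-1) \<le> s j)"
      hence u0: "u0 \<noteq> 0" "s j < e c (u0-1)" by auto
      have "a c (Suc (u0-1)) \<le> a c t" using u0 t by (intro aa[OF cmono]) simp
      hence "Inside c (u0-1)" unfolding Inside_def[OF cmono] using u0 q t(1) by (intro exI[of _ j]) auto
      thus False using bd0 u0 by simp
    qed
    show "j \<in> Qr" unfolding Qr_def using t(1) 1 2 by simp
  qed
  have SL0: "0 \<le> SL" by simp
  have ccases: "card Q = 0 \<or> card Q = 1 \<or> 2 \<le> card Q" by arith
  consider (e0) "Q = {}" | (e2) "2 \<le> card Q" | (e1) "card Q = 1"
    using ccases finQ by auto
  then show ?thesis
  proof cases
    case e0
    have "\<forall>t\<in>{u0..<u}. gg c t = 0"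
    proof
      fix t assume t: "t \<in> {u0..<u}"
      show "gg c t = 0"
      proof (rule gg_zero[OF cmono])
        show "t < n" using t uu by simp
        fix j assume "j < m" thus "\<not> meets c t j" using e0 t unfolding Q_def by auto
      qed
    qed
    hence "(\<Sum>t\<in>{u0..<u}. gg c t) = 0" by simp
    thus ?thesis by simp
  next
    case e2
    have "card Q \<le> card Qr" by (rule card_mono[OF finQr QQr])
    hence cq: "2 \<le> card Qr" using e2 by simp
    have "(\<Sum>t\<in>{u0..<u}. gg c t) \<le> (\<Sum>t\<in>{u0..<u}. K)"
      by (rule sum_mono) (use uu in \<open>auto intro: gg_K[OF cmono]\<close>)
    also have "\<dots> = (u - u0 - 1)*K + K"
    proof -
      have "u - u0 = Suc (u - u0 - 1)" using uu by simp
      hence "(\<Sum>t\<in>{u0..<u}. K) = Suc (u - u0 - 1) * K" by simp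
      thus ?thesis by simp
    qed
    also have "\<dots> \<le> (u - u0 - 1)*K + 2*k1*2" using K_le by simp
    also have "\<dots> \<le> (u - u0 - 1)*K + 2*k1*card Qr" using cq by simp
    finally show ?thesis unfolding Qr_def by simp
  next
    case e1
    then obtain j where Qj: "Q = {j}" using card_1_singletonE by blast
    hence jQr: "j \<in> Qr" using QQr by auto
    hence jm: "j < m" unfolding Qr_def by simp
    have cq: "1 \<le> card Qr" using jQr finQr card_gt_0_iff[of Qr] by auto
    show ?thesis
    proof (cases "u = Suc u0")
      case True
      have "j \<in> Q" using Qj by simp
      then obtain t0 where t0: "u0 \<le> t0" "t0 < u" "meets c t0 j" unfolding Q_def by blast
      have "t0 = u0" using t0(1,2) True by simp
      hence mj: "meets c u0 j" using t0(3) by simp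
      have inL: "(u0, j) \<in> Lam c"
        unfolding Lam_def[OF cmono]
      proof (simp, intro conjI allI impI)
        show "u0 < n" using uu True by simp
        show "j < m" by (rule jm)
        show "meets c u0 j" by (rule mj)
        fix j' assume "j' < m" "meets c u0 j'"
        hence "j' \<in> Q" unfolding Q_def using True by auto
        thus "j' = j" using Qj by simp
      next
        fix t' assume t': "t' < n" "meets c t' j"
        obtain q where q: "a c u0 \<le> q" "q < e c u0" "s j \<le> q" "q < s j + b" using mj unfolding meets_def[OF cmono] by blast
        obtain q' where q': "a c t' \<le> q'" "q' < e c t'" "s j \<le> q'" "q' < s j + b" using t'(2) unfolding meets_def[OF cmono] by blast
        show "t' = u0"
        proof (rule ccontr)
          assume ne: "t' \<noteq> u0"
          show False
          proof (cases "t' < u0")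
            case True
            have "e c t' \<le> e c (u0-1)" using True by (intro ee[OF cmono]) simp
            moreover have "e c (u0-1) \<le> s j" using jQr True unfolding Qr_def by auto
            ultimately show False using q' by simp
          next
            case False
            hence "u \<le> t'" using ne True by simp
            hence "u \<noteq> n" using t' by simp
            hence "\<not> Inside c u0" using bd1 True by simp
            hence "\<not> (a c (Suc u0) < s j + b)" using q jm unfolding Inside_def[OF cmono] by auto
            moreover have "a c (Suc u0) \<le> a c t'" using \<open>u \<le> t'\<close> True by (intro aa[OF cmono]) simp
            ultimately show False using q' by simp
          qed
        qed
      qed
      have LLle: "LL u0 j \<le> SL"
      proof -
        have "(u0, j) \<in> {p\<in>Lam c. u0 \<le> fst p \<and> fst p < u}" using inL True by simp
        moreover have "finite {p\<in>Lam c. u0 \<le> fst p \<and> fst p < u}" using Lam_fin[OF cmono] by simp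
        ultimately show ?thesis unfolding SL_def
          using member_le_sum[of "(u0,j)" "{p\<in>Lam c. u0 \<le> fst p \<and> fst p < u}" "\<lambda>p. LL (fst p) (snd p)"] by simp
      qed
      have k2: "2*k1 \<le> 2*k1*card Qr" using cq by simp
      have "(\<Sum>t\<in>{u0..<u}. gg c t) = gg c u0" using True by simp
      also have "\<dots> \<le> 2*k1 + LL u0 j" by (rule gg_aligned[OF cmono inL])
      also have "\<dots> \<le> (u - u0 - 1)*K + 2*k1*card Qr + SL" using LLle k2 by linarith
      finally show ?thesis unfolding Qr_def SL_def .
    next
      case False
      hence u2: "u0 + 2 \<le> u" using uu by simp
      define A where "A t = {q. a c t \<le> q \<and> q < e c t \<and> s j \<le> q \<and> q < s j + b}" for t
      have finA: "finite (A t)" for t unfolding A_def by (rule finite_subset[of _ "{..<e c t}"]) auto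
      have ggA: "gg c t \<le> card (A t)" if "t \<in> {u0..<u}" for t
      proof -
        have tn: "t < n" using that uu by simp
        have "{q. a c t \<le> q \<and> q < e c t \<and> inR q} \<subseteq> A t"
        proof
          fix q assume "q \<in> {q. a c t \<le> q \<and> q < e c t \<and> inR q}"
          hence q: "a c t \<le> q" "q < e c t" "inR q" by auto
          then obtain j' where j': "j' < m" "meets c t j'" "s j' \<le> q" "q < s j' + b" by (rule inR_meets[OF cmono])
          hence "j' \<in> Q" unfolding Q_def using that by auto
          hence "j' = j" using Qj by simp
          thus "q \<in> A t" unfolding A_def using q j' by simp
        qed
        hence "NMc (a c t) (e c t) \<le> card (A t)" unfolding NMc_def by (rule card_mono[OF finA])
        thus ?thesis using gg_NM[OF cmono tn] by simp
      qed
      have disj: "A t \<inter> A t' = {}" if "t \<in> {u0..<u}" "t' \<in> {u0..<u}" "t \<noteq> t'" for t t'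
      proof -
        { fix x y :: nat assume "x < y"
          hence "e c x \<le> a c y" by (rule ea[OF cmono])
          hence "A x \<inter> A y = {}" unfolding A_def by auto }
        moreover have "t < t' \<or> t' < t" using that(3) by arith
        ultimately show ?thesis by (auto simp: Int_commute)
      qed
      have "(\<Sum>t\<in>{u0..<u}. gg c t) \<le> (\<Sum>t\<in>{u0..<u}. card (A t))" by (rule sum_mono) (rule ggA)
      also have "\<dots> = card (\<Union>t\<in>{u0..<u}. A t)"
        by (rule card_UN_disjoint[symmetric]) (auto simp: finA disj)
      also have "\<dots> \<le> card {s j..<s j + b}" by (rule card_mono) (auto simp: A_def)
      also have "\<dots> = b" by simp
      also have "\<dots> \<le> K + 2*k1" by (rule b_le)
      also have "\<dots> \<le> (u - u0 - 1)*K + 2*k1*card Qr + SL"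
      proof -
        have "1 \<le> u - u0 - 1" using u2 by simp
        hence "1*K \<le> (u - u0 - 1)*K" by (rule mult_le_mono1)
        hence "K \<le> (u - u0 - 1)*K" by simp
        moreover have "2*k1 \<le> 2*k1*card Qr" using cq by simp
        ultimately show ?thesis by linarith
      qed
      finally show ?thesis unfolding Qr_def SL_def .
    qed
  qed
qed

end
end



context red begin
context
  fixes c :: "nat \<Rightarrow> nat"
  assumes cmono: "mono c"
begin

lemma prefix_bound:
  "1 \<le> u \<Longrightarrow> u \<le> n \<Longrightarrow> (u = n \<or> \<not> Inside c (u-1)) \<Longrightarrow>
   (\<Sum>t<u. gg c t) + (\<Sum>t<u-1. hh c t) \<le> (u-1)*K + 2*k1*card {j. j<m \<and> s j < e c (u-1)}
      + (\<Sum>p\<in>{p\<in>Lam c. fst p < u}. LL (fst p) (snd p))"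
proof (induction u rule: less_induct)
  case (less u)
  define B where "B = {v. 1 \<le> v \<and> v < u \<and> \<not> Inside c (v-1)}"
  have finB: "finite B" unfolding B_def by (rule finite_subset[of _ "{..<u}"]) auto
  show ?case
  proof (cases "B = {}")
    case True
    have ins: "Inside c t" if "t < u - 1" for t
    proof (rule ccontr)
      assume "\<not> Inside c t"
      hence "Suc t \<in> B" unfolding B_def using that by simp
      thus False using True by simp
    qed
    have h0: "(\<Sum>t<u-1. hh c t) = 0" using ins inside_hh[OF cmono] by simp
    have r: "(\<Sum>t\<in>{0..<u}. gg c t) \<le> (u - 0 - 1)*K
     + 2*k1*card {j. j<m \<and> (0 = (0::nat) \<or> e c (0-1) \<le> s j) \<and> s j < e c (u-1)}
     + (\<Sum>p\<in>{p\<in>Lam c. 0 \<le> fst p \<and> fst p < u}. LL (fst p) (snd p))"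
      by (rule run_bound[OF cmono]) (use less.prems in auto)
    have "{..<u} = {0..<u}" by auto
    thus ?thesis using r h0 by simp
  next
    case False
    define u0 where "u0 = Max B"
    have u0B: "u0 \<in> B" unfolding u0_def using finB False by (rule Max_in)
    hence u0: "1 \<le> u0" "u0 < u" "\<not> Inside c (u0-1)" unfolding B_def by auto
    have IH: "(\<Sum>t<u0. gg c t) + (\<Sum>t<u0-1. hh c t) \<le> (u0-1)*K + 2*k1*card {j. j<m \<and> s j < e c (u0-1)}
      + (\<Sum>p\<in>{p\<in>Lam c. fst p < u0}. LL (fst p) (snd p))"
      using less.IH[of u0] u0 less.prems(2) by linarith
    have ins: "Inside c t" if "u0 \<le> t" "t < u - 1" for t
    proof (rule ccontr)
      assume "\<not> Inside c t"
      hence "Suc t \<in> B" unfolding B_def using that by simp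
      hence "Suc t \<le> u0" unfolding u0_def by (rule Max_ge[OF finB])
      thus False using that by simp
    qed
    have r: "(\<Sum>t\<in>{u0..<u}. gg c t) \<le> (u - u0 - 1)*K
     + 2*k1*card {j. j<m \<and> (u0 = 0 \<or> e c (u0-1) \<le> s j) \<and> s j < e c (u-1)}
     + (\<Sum>p\<in>{p\<in>Lam c. u0 \<le> fst p \<and> fst p < u}. LL (fst p) (snd p))"
    proof (rule run_bound[OF cmono])
      show "u0 < u" by (rule u0(2))
      show "u \<le> n" by (rule less.prems(2))
      show "u0 = 0 \<or> \<not> Inside c (u0 - 1)" using u0(3) by simp
      show "u = n \<or> \<not> Inside c (u - 1)" by (rule less.prems(3))
    qed
    have sg: "(\<Sum>t<u. gg c t) = (\<Sum>t<u0. gg c t) + (\<Sum>t\<in>{u0..<u}. gg c t)"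
      using u0 by (intro sum_split_at) simp
    have sh1: "(\<Sum>t<u-1. hh c t) = (\<Sum>t<u0. hh c t) + (\<Sum>t\<in>{u0..<u-1}. hh c t)"
      using u0 by (intro sum_split_at) simp
    have sh2: "(\<Sum>t\<in>{u0..<u-1}. hh c t) = 0" using ins inside_hh[OF cmono] by simp
    have sh3: "(\<Sum>t<u0. hh c t) = (\<Sum>t<u0-1. hh c t) + hh c (u0-1)"
    proof -
      have "u0 = Suc (u0 - 1)" using u0 by simp
      hence "(\<Sum>t<u0. hh c t) = (\<Sum>t<Suc (u0-1). hh c t)" by simp
      thus ?thesis by simp
    qed
    have hK: "hh c (u0-1) \<le> K" by (rule hh_K[OF cmono])
    have ee1: "e c (u0-1) \<le> e c (u-1)" using u0 by (intro ee[OF cmono]) simp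
    have cardeq: "card {j. j<m \<and> s j < e c (u-1)} = card {j. j<m \<and> s j < e c (u0-1)}
        + card {j. j<m \<and> (u0 = 0 \<or> e c (u0-1) \<le> s j) \<and> s j < e c (u-1)}"
    proof -
      have "{j. j<m \<and> s j < e c (u-1)} = {j. j<m \<and> s j < e c (u0-1)} \<union> {j. j<m \<and> (u0 = 0 \<or> e c (u0-1) \<le> s j) \<and> s j < e c (u-1)}"
        using ee1 u0 by auto
      moreover have "{j. j<m \<and> s j < e c (u0-1)} \<inter> {j. j<m \<and> (u0 = 0 \<or> e c (u0-1) \<le> s j) \<and> s j < e c (u-1)} = {}"
        using u0 by auto
      ultimately show ?thesis by (simp add: card_Un_disjoint)
    qed
    have Leq: "(\<Sum>p\<in>{p\<in>Lam c. fst p < u}. LL (fst p) (snd p)) = (\<Sum>p\<in>{p\<in>Lam c. fst p < u0}. LL (fst p) (snd p))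
        + (\<Sum>p\<in>{p\<in>Lam c. u0 \<le> fst p \<and> fst p < u}. LL (fst p) (snd p))"
    proof -
      have "{p\<in>Lam c. fst p < u} = {p\<in>Lam c. fst p < u0} \<union> {p\<in>Lam c. u0 \<le> fst p \<and> fst p < u}" using u0 by auto
      moreover have "{p\<in>Lam c. fst p < u0} \<inter> {p\<in>Lam c. u0 \<le> fst p \<and> fst p < u} = {}" by auto
      moreover have "finite (Lam c)" by (rule Lam_fin[OF cmono])
      ultimately show ?thesis by (simp add: sum.union_disjoint)
    qed
    have ar: "(u0-1)*K + K + (u - u0 - 1)*K = (u-1)*K"
    proof -
      have "(u0-1) + 1 + (u - u0 - 1) = u - 1" using u0 by simp
      hence "((u0-1) + 1 + (u - u0 - 1))*K = (u-1)*K" by simp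
      thus ?thesis by (simp add: algebra_simps)
    qed
    have "2*k1*card {j. j<m \<and> s j < e c (u-1)} = 2*k1*card {j. j<m \<and> s j < e c (u0-1)}
        + 2*k1*card {j. j<m \<and> (u0 = 0 \<or> e c (u0-1) \<le> s j) \<and> s j < e c (u-1)}"
      unfolding cardeq by (simp add: algebra_simps)
    thus ?thesis using IH r sg sh1 sh2 sh3 hK Leq ar by linarith
  qed
qed

lemma total_bound:
  "(\<Sum>t<n. gg c t) + (\<Sum>t<n-1. hh c t) \<le> (n-1)*K + 2*k1*m + (\<Sum>p\<in>Lam c. LL (fst p) (snd p))"
proof -
  have pb: "(\<Sum>t<n. gg c t) + (\<Sum>t<n-1. hh c t) \<le> (n-1)*K + 2*k1*card {j. j<m \<and> s j < e c (n-1)}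
      + (\<Sum>p\<in>{p\<in>Lam c. fst p < n}. LL (fst p) (snd p))"
    using prefix_bound[of n] n1 by simp
  have "card {j. j<m \<and> s j < e c (n-1)} \<le> card {..<m}" by (rule card_mono) auto
  hence "2*k1*card {j. j<m \<and> s j < e c (n-1)} \<le> 2*k1*m" by simp
  moreover have eqL: "{p\<in>Lam c. fst p < n} = Lam c"
  proof -
    have "fst p < n" if "p \<in> Lam c" for p
    proof -
      obtain t j where p: "p = (t,j)" by (cases p)
      thus ?thesis using that unfolding Lam_def[OF cmono] by simp
    qed
    thus ?thesis by blast
  qed
  moreover note pb[unfolded eqL]
  ultimately show ?thesis by linarith
qed

end
end



context red begin
context
  fixes c :: "nat \<Rightarrow> nat"
  assumes cmono: "mono c"
begin

lemma Lam_mem: "(t,j) \<in> Lam c \<longleftrightarrow> t < n \<and> j < m \<and> meets c t j \<and> (\<forall>j'<m. meets c t j' \<longrightarrow> j' = j) \<and> (\<forall>t'<n. meets c t' j \<longrightarrow> t' = t)"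
  unfolding Lam_def[OF cmono] by simp

lemma Lam_sub: "p \<in> Lam c \<Longrightarrow> fst p < n \<and> snd p < m"
proof -
  assume p: "p \<in> Lam c"
  obtain t j where "p = (t,j)" by (cases p)
  thus ?thesis using p by (simp add: Lam_mem)
qed

lemma Lam_snd_inj: "inj_on snd (Lam c)"
proof (rule inj_onI)
  fix p q assume pq: "p \<in> Lam c" "q \<in> Lam c" "snd p = snd q"
  obtain t j where p: "p = (t,j)" by (cases p)
  obtain t' j' where q: "q = (t',j')" by (cases q)
  have "j = j'" using pq p q by simp
  hence "t' = t" using pq(1,2) p q by (auto simp: Lam_mem)
  thus "p = q" using p q \<open>j = j'\<close> by simp
qed

lemma Lam_fst_inj: "inj_on fst (Lam c)"
proof (rule inj_onI)
  fix p q assume pq: "p \<in> Lam c" "q \<in> Lam c" "fst p = fst q"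
  obtain t j where p: "p = (t,j)" by (cases p)
  obtain t' j' where q: "q = (t',j')" by (cases q)
  have "t = t'" using pq p q by simp
  hence "j' = j" using pq(1,2) p q by (auto simp: Lam_mem)
  thus "p = q" using p q \<open>t = t'\<close> by simp
qed

lemma Lam_order: assumes "(t,j) \<in> Lam c" "(t',j') \<in> Lam c" "t < t'" shows "j < j'"
proof -
  have "j \<le> j'" using assms meets_mono[OF cmono, of t j t' j'] by (auto simp: Lam_mem)
  moreover have "j \<noteq> j'" using assms by (auto simp: Lam_mem)
  ultimately show ?thesis by simp
qed

lemma penalty_bound:
  assumes cardL: "card (Lam c) = m"
    and spread: "m < Max (fst ` Lam c) + 1 - Min (fst ` Lam c)"
  shows "(\<Sum>t<n. gg c t) + (\<Sum>t<n-1. hh c t) + K \<le> (n-1)*K + 2*k1*m + (\<Sum>p\<in>Lam c. LL (fst p) (snd p))"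
proof -
  define T where "T = fst ` Lam c"
  have finL: "finite (Lam c)" by (rule Lam_fin[OF cmono])
  have finT: "finite T" unfolding T_def using finL by simp
  have cardT: "card T = m" unfolding T_def using card_image[OF Lam_fst_inj] cardL by simp
  have Tne: "T \<noteq> {}" using cardT m1 by auto
  have Tn: "\<And>t. t \<in> T \<Longrightarrow> t < n"
  proof -
    fix t assume "t \<in> T"
    then obtain p where "p \<in> Lam c" "t = fst p" unfolding T_def by blast
    thus "t < n" using Lam_sub by simp
  qed
  have inT: "\<And>t j. (t,j) \<in> Lam c \<Longrightarrow> t \<in> T" unfolding T_def by (metis fst_conv image_eqI)
  have sndL: "snd ` Lam c = {..<m}"
  proof (rule card_subset_eq)
    show "finite {..<m}" by simp
    show "snd ` Lam c \<subseteq> {..<m}" using Lam_sub by auto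
    show "card (snd ` Lam c) = card {..<m}" using card_image[OF Lam_snd_inj] cardL by simp
  qed
  have partner: "\<exists>t. (t,j) \<in> Lam c" if jm: "j < m" for j
  proof -
    have "j \<in> snd ` Lam c" using sndL jm by simp
    then obtain p where "p \<in> Lam c" "j = snd p" by blast
    thus ?thesis by (intro exI[of _ "fst p"]) simp
  qed
  have partnerT: "\<exists>j. (t,j) \<in> Lam c" if tT: "t \<in> T" for t
  proof -
    obtain p where "p \<in> Lam c" "t = fst p" using tT unfolding T_def by blast
    thus ?thesis by (intro exI[of _ "snd p"]) simp
  qed
  have gzero: "gg c t = 0" if "t < n" "t \<notin> T" for t
  proof (rule gg_zero[OF cmono that(1)])
    fix j assume j: "j < m"
    show "\<not> meets c t j"
    proof
      assume mt: "meets c t j"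
      obtain t' where t': "(t',j) \<in> Lam c" using partner[OF j] by blast
      hence "t = t'" using mt that(1) by (auto simp: Lam_mem)
      hence "t \<in> T" using inT[OF t'] by simp
      thus False using that by simp
    qed
  qed
  have "(\<Sum>t<n. gg c t) = (\<Sum>t\<in>T. gg c t)"
    by (rule sum.mono_neutral_right) (use Tn gzero in auto)
  also have "\<dots> = (\<Sum>p\<in>Lam c. gg c (fst p))" unfolding T_def by (rule sum.reindex[OF Lam_fst_inj, unfolded comp_def])
  also have "\<dots> \<le> (\<Sum>p\<in>Lam c. 2*k1 + LL (fst p) (snd p))"
  proof (rule sum_mono)
    fix p assume "p \<in> Lam c"
    thus "gg c (fst p) \<le> 2*k1 + LL (fst p) (snd p)" using gg_aligned[OF cmono, of "fst p" "snd p"] by simp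
  qed
  also have "\<dots> = 2*k1*m + (\<Sum>p\<in>Lam c. LL (fst p) (snd p))" using cardL by (simp add: sum.distrib)
  finally have gsum: "(\<Sum>t<n. gg c t) \<le> 2*k1*m + (\<Sum>p\<in>Lam c. LL (fst p) (snd p))" .
  define mn where "mn = Min T"
  define mx where "mx = Max T"
  have mnT: "mn \<in> T" unfolding mn_def using finT Tne by (rule Min_in)
  have mxT: "mx \<in> T" unfolding mx_def using finT Tne by (rule Max_in)
  obtain t0 where t0: "mn < t0" "t0 < mx" "t0 \<notin> T"
  proof -
    have "\<exists>t0. mn \<le> t0 \<and> t0 \<le> mx \<and> t0 \<notin> T"
    proof (rule ccontr)
      assume "\<not> ?thesis"
      hence "{mn..mx} \<subseteq> T" by auto
      hence "card {mn..mx} \<le> card T" by (rule card_mono[OF finT])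
      thus False using spread cardT unfolding T_def[symmetric] mn_def[symmetric] mx_def[symmetric] by simp
    qed
    then obtain t0 where "mn \<le> t0" "t0 \<le> mx" "t0 \<notin> T" by blast
    moreover have "t0 \<noteq> mn" "t0 \<noteq> mx" using mnT mxT \<open>t0 \<notin> T\<close> by auto
    ultimately have "mn < t0" "t0 < mx" by auto
    thus ?thesis using that \<open>t0 \<notin> T\<close> by blast
  qed
  define ta where "ta = Max {t\<in>T. t < t0}"
  define tb where "tb = Min {t\<in>T. t0 < t}"
  have fA: "finite {t\<in>T. t < t0}" using finT by simp
  have fB: "finite {t\<in>T. t0 < t}" using finT by simp
  have neA: "{t\<in>T. t < t0} \<noteq> {}" using mnT t0 by auto
  have neB: "{t\<in>T. t0 < t} \<noteq> {}" using mxT t0 by auto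
  have taA: "ta \<in> {t\<in>T. t < t0}" unfolding ta_def using fA neA by (rule Max_in)
  have tbB: "tb \<in> {t\<in>T. t0 < t}" unfolding tb_def using fB neB by (rule Min_in)
  have taMax: "\<And>t. t \<in> T \<Longrightarrow> t < t0 \<Longrightarrow> t \<le> ta" unfolding ta_def using fA by (auto intro: Max_ge)
  have tbMin: "\<And>t. t \<in> T \<Longrightarrow> t0 < t \<Longrightarrow> tb \<le> t" unfolding tb_def using fB by (auto intro: Min_le)
  obtain ja where ja: "(ta, ja) \<in> Lam c" using partnerT taA by blast
  obtain jb where jb: "(tb, jb) \<in> Lam c" using partnerT tbB by blast
  have tatb: "ta < t0" "t0 < tb" "tb < n" using taA tbB Tn by auto
  have jajb: "ja < jb" by (rule Lam_order[OF ja jb]) (use tatb in simp)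
  have jb1: "jb = Suc ja"
  proof (rule ccontr)
    assume "jb \<noteq> Suc ja"
    hence lt: "Suc ja < jb" using jajb by simp
    hence "Suc ja < m" using jb by (simp add: Lam_mem)
    then obtain t' where t': "(t', Suc ja) \<in> Lam c" using partner by blast
    have t'T: "t' \<in> T" by (rule inT[OF t'])
    have "ta < t'"
    proof (rule ccontr)
      assume "\<not> ta < t'"
      hence "t' < ta \<or> t' = ta" by auto
      thus False
      proof
        assume "t' < ta" thus False using Lam_order[OF t' ja] by simp
      next
        assume "t' = ta" thus False using inj_onD[OF Lam_fst_inj _ t' ja] by simp
      qed
    qed
    moreover have "t' < tb"
    proof (rule ccontr)
      assume "\<not> t' < tb"
      hence "tb < t' \<or> t' = tb" by auto
      thus False
      proof
        assume "tb < t'" thus False using Lam_order[OF jb t'] lt by simp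
      next
        assume "t' = tb" thus False using inj_onD[OF Lam_fst_inj _ t' jb] lt by simp
      qed
    qed
    moreover have "t' \<noteq> t0" using t'T t0 by auto
    ultimately show False using taMax[OF t'T] tbMin[OF t'T] by (cases "t' < t0") auto
  qed
  have jbm: "jb < m" using jb by (simp add: Lam_mem)
  obtain qa where qa: "a c ta \<le> qa" "qa < e c ta" "s ja \<le> qa" "qa < s ja + b"
    using ja by (auto simp: Lam_mem meets_def[OF cmono])
  obtain qb where qb: "a c tb \<le> qb" "qb < e c tb" "s jb \<le> qb" "qb < s jb + b"
    using jb by (auto simp: Lam_mem meets_def[OF cmono])
  define u1 where "u1 = ta"
  define u2 where "u2 = tb - 1"
  have u12: "u1 < u2" "u2 < n - 1" using tatb unfolding u1_def u2_def by auto
  have Su2: "Suc u2 = tb" using tatb unfolding u2_def by simp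
  define I1 where "I1 = {q. e c u1 \<le> q \<and> q < a c (Suc u1) \<and> \<not> inR q}"
  define I2 where "I2 = {q. e c u2 \<le> q \<and> q < a c (Suc u2) \<and> \<not> inR q}"
  have fI1: "finite I1" unfolding I1_def by (rule finite_subset[of _ "{..<a c (Suc u1)}"]) auto
  have fI2: "finite I2" unfolding I2_def by (rule finite_subset[of _ "{..<a c (Suc u2)}"]) auto
  have sep: "a c (Suc u1) \<le> e c u2" unfolding a_def[OF cmono] e_def[OF cmono] using u12 by (intro cm[OF cmono]) simp
  have dis: "I1 \<inter> I2 = {}" unfolding I1_def I2_def using sep by auto
  have sub: "I1 \<union> I2 \<subseteq> {s ja + b..<s (Suc ja)}"
  proof
    fix q assume q: "q \<in> I1 \<union> I2"
    have "e c ta \<le> e c u1" "e c u1 \<le> e c u2" using u12 unfolding u1_def by (auto intro: ee[OF cmono])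
    hence lo: "s ja < q" using q qa sep unfolding I1_def I2_def u1_def
      by (auto dest: order.strict_trans1)
    have "e c u2 \<le> a c (Suc u2)" by (rule ea[OF cmono]) simp
    hence hi: "q < s jb + b" using q qb Su2 sep unfolding I1_def I2_def by auto
    have nr: "\<not> inR q" using q unfolding I1_def I2_def by auto
    have jam: "ja < m" using jajb jbm by simp
    have "\<not> q < s ja + b"
    proof
      assume "q < s ja + b"
      hence "inR q" unfolding inR_def using lo jam by (intro exI[of _ ja]) auto
      thus False using nr by simp
    qed
    moreover have "\<not> s (Suc ja) \<le> q"
    proof
      assume "s (Suc ja) \<le> q"
      hence "inR q" unfolding inR_def using hi jb1 jbm by (intro exI[of _ jb]) auto
      thus False using nr by simp
    qed
    ultimately show "q \<in> {s ja + b..<s (Suc ja)}" by simp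
  qed
  have "hh c u1 + hh c u2 \<le> card I1 + card I2"
    using hh_MU[OF cmono, of u1] hh_MU[OF cmono, of u2] unfolding MUc_def I1_def I2_def by simp
  also have "\<dots> = card (I1 \<union> I2)" using card_Un_disjoint[OF fI1 fI2 dis] by simp
  also have "\<dots> \<le> card {s ja + b..<s (Suc ja)}" by (rule card_mono) (use sub in auto)
  also have "\<dots> = K" using s_Suc[of ja] by simp
  finally have h12: "hh c u1 + hh c u2 \<le> K" .
  define S' where "S' = {..<n-1} - {u1, u2}"
  have hsplit: "(\<Sum>t<n-1. hh c t) = (\<Sum>t\<in>{u1,u2}. hh c t) + (\<Sum>t\<in>S'. hh c t)"
  proof -
    have "{u1,u2} \<subseteq> {..<n-1}" using u12 by auto
    from sum.subset_diff[OF this, of "hh c"] show ?thesis unfolding S'_def by (simp add: add.commute)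
  qed
  have "(\<Sum>t\<in>{u1,u2}. hh c t) = hh c u1 + hh c u2" using u12 by simp
  moreover have "(\<Sum>t\<in>S'. hh c t) \<le> card S' * K"
    using sum_bounded_above[of S' "hh c" K] hh_K[OF cmono] by simp
  moreover have "card S' = n - 3" unfolding S'_def using u12 by (subst card_Diff_subset) auto
  ultimately have "(\<Sum>t<n-1. hh c t) \<le> K + (n-3)*K" using hsplit h12 by simp
  moreover have "K + (n-3)*K + K = (n-1)*K"
  proof -
    have "n \<ge> 3" using u12 by simp
    hence "1 + (n-3) + 1 = n - 1" by simp
    hence "(1 + (n-3) + 1)*K = (n-1)*K" by simp
    thus ?thesis by (simp add: algebra_simps)
  qed
  ultimately show ?thesis using gsum by linarith
qed

end
end



context red begin

lemma cut_pieces: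
  "\<exists>c. mono c \<and> LCS (build_X \<sigma> \<rho> \<mu> k1 K Xs n) (build_Y \<sigma> \<rho> \<mu> k1 K Ys n m) = (\<Sum>t<n. gg c t) + (\<Sum>t<n-1. hh c t)"
proof -
  define r where "r = 2*n-2"
  have r: "Suc r = 2*n-1" using n1 unfolding r_def by simp
  let ?Y = "map yf [0..<N]"
  obtain c where c: "mono c" "c 0 = 0" "\<forall>k. Suc r \<le> k \<longrightarrow> c k = length ?Y"
    "LCS (concat (map px [0..<Suc r])) ?Y = (\<Sum>k<Suc r. LCS (px k) (drop (c k) (take (c (Suc k)) ?Y)))"
    using LCS_concat_split[of r ?Y px] by blast
  have cN: "c k \<le> N" for k
  proof -
    have "c k \<le> c (max k (Suc r))" using c(1) by (simp add: mono_def)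
    thus ?thesis using c(3) by simp
  qed
  have piece: "drop (c k) (take (c (Suc k)) ?Y) = map yf [c k..<c (Suc k)]" for k
    using cN[of "Suc k"] by (simp add: take_map drop_map min_def)
  have "LCS (build_X \<sigma> \<rho> \<mu> k1 K Xs n) (build_Y \<sigma> \<rho> \<mu> k1 K Ys n m)
      = (\<Sum>k<2*n-1. LCS (px k) (map yf [c k..<c (Suc k)]))"
    using c(4) unfolding X_form Y_map r piece by simp
  also have "\<dots> = (\<Sum>t<n. LCS (px (2*t)) (map yf [c (2*t)..<c (Suc (2*t))]))
      + (\<Sum>t<n-1. LCS (px (2*t+1)) (map yf [c (2*t+1)..<c (Suc (2*t+1))]))"
    by (rule sum_parity_split[OF n1])
  also have "\<dots> = (\<Sum>t<n. gg c t) + (\<Sum>t<n-1. hh c t)"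
    unfolding gg_def[OF c(1)] hh_def[OF c(1)] a_def[OF c(1)] e_def[OF c(1)] px_def by simp
  finally show ?thesis using c(1) by blast
qed

lemma rep_sub: "subseq (replicate (r*K) \<mu>) (concat (map px [x..<x+2*r]))"
proof (induction r)
  case 0 show ?case by simp
next
  case (Suc r)
  have u: "[x..<x+2*Suc r] = [x..<x+2*r] @ [x+2*r, x+2*r+1]" by simp
  have "Suc r * K = r*K + K" by simp
  hence rep: "replicate (Suc r * K) \<mu> = replicate (r*K) \<mu> @ replicate K \<mu>" by (simp only: replicate_add)
  have two: "subseq (replicate K \<mu>) (px (x+2*r) @ px (x+2*r+1))"
  proof (cases "even (x+2*r)")
    case True
    hence "px (x+2*r+1) = replicate K \<mu>" by (simp add: px_def)
    thus ?thesis by (simp add: subseq_drop_many)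
  next
    case False
    hence "px (x+2*r) = replicate K \<mu>" by (simp add: px_def)
    thus ?thesis by (simp add: subseq_rev_drop_many)
  qed
  show ?case unfolding u rep using list_emb_append_mono[OF Suc.IH two] by simp
qed

lemma rep_LCS:
  assumes "r \<le> n"
  shows "r*K \<le> LCS (concat (map px [x..<x+2*r])) (replicate (n*K) \<mu>)"
proof -
  have "r*K \<le> n*K" using assms by simp
  hence "subseq (replicate (r*K) \<mu>) (replicate (n*K) \<mu>)"
    by (metis le_add_diff_inverse replicate_add subseq_rev_drop_many subseq_order.order_refl)
  from LCS_ge[OF rep_sub this] show ?thesis by simp
qed

lemma struct_lower:
  assumes "\<Delta> + m \<le> n"
  shows "(n-1)*K + 2*k1*m + (\<Sum>r<m. LL (\<Delta>+r) r) \<le> LCS (build_X \<sigma> \<rho> \<mu> k1 K Xs n) (build_Y \<sigma> \<rho> \<mu> k1 K Ys n m)"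
proof -
  define A where "A = concat (map px [0..<0+2*\<Delta>])"
  define Bm where "Bm = concat (map px [2*\<Delta>..<2*\<Delta>+(2*m-1)])"
  define C where "C = concat (map px [2*\<Delta>+(2*m-1)..<(2*\<Delta>+(2*m-1)) + 2*(n-\<Delta>-m)])"
  have e1: "2*\<Delta>+(2*m-1) + 2*(n-\<Delta>-m) = 2*n-1" using assms m1 by simp
  have X: "build_X \<sigma> \<rho> \<mu> k1 K Xs n = A @ Bm @ C"
  proof -
    have l1: "[0..<2*\<Delta> + (2*m-1)] = [0..<2*\<Delta>] @ [2*\<Delta>..<2*\<Delta>+(2*m-1)]" by (rule upt_add_eq_append) simp
    have l2: "[0..<(2*\<Delta>+(2*m-1)) + 2*(n-\<Delta>-m)] = [0..<2*\<Delta>+(2*m-1)] @ [2*\<Delta>+(2*m-1)..<(2*\<Delta>+(2*m-1)) + 2*(n-\<Delta>-m)]"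
      by (rule upt_add_eq_append) simp
    have "[0..<2*n-1] = [0..<0+2*\<Delta>] @ [2*\<Delta>..<2*\<Delta>+(2*m-1)] @ [2*\<Delta>+(2*m-1)..<(2*\<Delta>+(2*m-1)) + 2*(n-\<Delta>-m)]"
      using l1 l2 unfolding e1 by simp
    thus ?thesis unfolding X_form A_def Bm_def C_def by simp
  qed
  have Y: "build_Y \<sigma> \<rho> \<mu> k1 K Ys n m = replicate (n*K) \<mu> @ concat (map py [0..<2*m-1]) @ replicate (n*K) \<mu>"
    by (rule Y_form)
  have LA: "\<Delta>*K \<le> LCS A (replicate (n*K) \<mu>)" unfolding A_def using assms by (intro rep_LCS) simp
  have LC: "(n-\<Delta>-m)*K \<le> LCS C (replicate (n*K) \<mu>)" unfolding C_def by (intro rep_LCS) simp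
  have Bm': "Bm = concat (map (\<lambda>k. px (2*\<Delta> + k)) [0..<2*m-1])"
  proof -
    have "[2*\<Delta>..<2*\<Delta>+(2*m-1)] = map (\<lambda>k. k + 2*\<Delta>) [0..<2*m-1]" by (simp add: map_add_upt add.commute)
    thus ?thesis unfolding Bm_def by (simp add: comp_def add.commute)
  qed
  have "(\<Sum>k<2*m-1. LCS (px (2*\<Delta> + k)) (py k)) \<le> LCS Bm (concat (map py [0..<2*m-1]))"
    unfolding Bm' by (rule LCS_concat_ge)
  moreover have "(\<Sum>k<2*m-1. LCS (px (2*\<Delta> + k)) (py k)) = (\<Sum>r<m. LCS (px (2*\<Delta> + 2*r)) (py (2*r))) + (\<Sum>r<m-1. LCS (px (2*\<Delta> + (2*r+1))) (py (2*r+1)))"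
    by (rule sum_parity_split[OF m1])
  moreover have "(\<Sum>r<m. LCS (px (2*\<Delta> + 2*r)) (py (2*r))) \<ge> (\<Sum>r<m. 2*k1 + LL (\<Delta>+r) r)"
  proof (rule sum_mono)
    fix r assume "r \<in> {..<m}"
    have "px (2*\<Delta> + 2*r) = GX (\<Delta>+r)" unfolding px_def by simp
    moreover have "py (2*r) = GY r" unfolding py_def by simp
    ultimately show "2*k1 + LL (\<Delta>+r) r \<le> LCS (px (2*\<Delta> + 2*r)) (py (2*r))"
      unfolding GX_def GY_def LL_def by (simp add: LCS_Gpad_ge add.commute)
  qed
  moreover have "(\<Sum>r<m-1. LCS (px (2*\<Delta> + (2*r+1))) (py (2*r+1))) \<ge> (\<Sum>r<m-1. K)"
  proof (rule sum_mono)
    fix r assume "r \<in> {..<m-1}"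
    have "px (2*\<Delta> + (2*r+1)) = replicate K \<mu>" unfolding px_def by simp
    moreover have "py (2*r+1) = replicate K \<mu>" unfolding py_def by simp
    moreover have "K \<le> LCS (replicate K \<mu>) (replicate K \<mu>)"
      using LCS_ge[of "replicate K \<mu>" "replicate K \<mu>" "replicate K \<mu>"] by simp
    ultimately show "K \<le> LCS (px (2*\<Delta> + (2*r+1))) (py (2*r+1))" by simp
  qed
  ultimately have LB: "(\<Sum>r<m. 2*k1 + LL (\<Delta>+r) r) + (m-1)*K \<le> LCS Bm (concat (map py [0..<2*m-1]))"
    by simp
  have "LCS A (replicate (n*K) \<mu>) + LCS Bm (concat (map py [0..<2*m-1])) + LCS C (replicate (n*K) \<mu>)
      \<le> LCS (A @ Bm @ C) (replicate (n*K) \<mu> @ concat (map py [0..<2*m-1]) @ replicate (n*K) \<mu>)"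
    using LCS_append_ge[of Bm "concat (map py [0..<2*m-1])" C "replicate (n*K) \<mu>"]
      LCS_append_ge[of A "replicate (n*K) \<mu>" "Bm @ C" "concat (map py [0..<2*m-1]) @ replicate (n*K) \<mu>"]
    by simp
  moreover have "\<Delta>*K + ((\<Sum>r<m. 2*k1 + LL (\<Delta>+r) r) + (m-1)*K) + (n-\<Delta>-m)*K = (n-1)*K + 2*k1*m + (\<Sum>r<m. LL (\<Delta>+r) r)"
  proof -
    have "\<Delta> + (m-1) + (n-\<Delta>-m) = n-1" using assms m1 by simp
    hence "\<Delta>*K + (m-1)*K + (n-\<Delta>-m)*K = (n-1)*K" by (metis add_mult_distrib)
    moreover have "(\<Sum>r<m. 2*k1 + LL (\<Delta>+r) r) = 2*k1*m + (\<Sum>r<m. LL (\<Delta>+r) r)" by (simp add: sum.distrib)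
    ultimately show ?thesis by simp
  qed
  ultimately show ?thesis unfolding X Y using LA LB LC by linarith
qed

end



lemma chain_lists:
  fixes L :: "(nat \<times> nat) set"
  assumes "finite L" "\<forall>p\<in>L. \<forall>q\<in>L. fst p < fst q \<longrightarrow> snd p < snd q" "inj_on fst L"
  shows "\<exists>ixs jxs. length ixs = length jxs \<and> sorted_wrt (<) ixs \<and> sorted_wrt (<) jxs \<and>
     set (zip ixs jxs) = L \<and> set ixs = fst ` L \<and> set jxs = snd ` L"
  using assms
proof (induction L rule: finite_ranking_induct[where f = fst])
  case empty show ?case by (intro exI[of _ "[]"]) simp
next
  case (insert x S)
  show ?case
  proof (cases "x \<in> S")
    case True thus ?thesis using insert by (simp add: insert_absorb)
  next
    case False
    have ch: "\<forall>p\<in>S. \<forall>q\<in>S. fst p < fst q \<longrightarrow> snd p < snd q" using insert.prems(1) by blast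
    have inj: "inj_on fst S" using insert.prems(2) by (rule inj_on_subset) blast
    obtain ixs jxs where ij: "length ixs = length jxs" "sorted_wrt (<) ixs" "sorted_wrt (<) jxs"
      "set (zip ixs jxs) = S" "set ixs = fst ` S" "set jxs = snd ` S"
      using insert.IH[OF ch inj] by blast
    have lt1: "fst y < fst x" if "y \<in> S" for y
    proof -
      have "fst y \<le> fst x" using insert.hyps(2) that by simp
      moreover have "fst y \<noteq> fst x"
      proof
        assume "fst y = fst x"
        hence "y = x" using insert.prems(2) that by (auto simp: inj_on_def)
        thus False using False that by simp
      qed
      ultimately show ?thesis by simp
    qed
    have lt2: "snd y < snd x" if "y \<in> S" for y using insert.prems(1) lt1[OF that] that by blast
    show ?thesis
    proof (rule exI[of _ "ixs @ [fst x]"], rule exI[of _ "jxs @ [snd x]"], intro conjI)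
      show "length (ixs @ [fst x]) = length (jxs @ [snd x])" using ij by simp
      show "sorted_wrt (<) (ixs @ [fst x])" using ij lt1 by (auto simp: sorted_wrt_append)
      show "sorted_wrt (<) (jxs @ [snd x])" using ij lt2 by (auto simp: sorted_wrt_append)
      show "set (zip (ixs @ [fst x]) (jxs @ [snd x])) = insert x S" using ij by (simp add: zip_append)
      show "set (ixs @ [fst x]) = fst ` insert x S" using ij by simp
      show "set (jxs @ [snd x]) = snd ` insert x S" using ij by simp
    qed
  qed
qed

lemma chain_in_alignments:
  fixes L :: "(nat \<times> nat) set"
  assumes "finite L" "\<forall>p\<in>L. \<forall>q\<in>L. fst p < fst q \<longrightarrow> snd p < snd q" "inj_on fst L"
    "L \<subseteq> {1..n} \<times> {1..m}"
  shows "L \<in> alignments n m"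
proof -
  obtain ixs jxs where ij: "length ixs = length jxs" "sorted_wrt (<) ixs" "sorted_wrt (<) jxs"
     "set (zip ixs jxs) = L" "set ixs = fst ` L" "set jxs = snd ` L"
    using chain_lists[OF assms(1-3)] by blast
  have "distinct jxs" using ij(3) by (simp add: strict_sorted_iff)
  hence "length jxs = card (snd ` L)" using ij(6) by (metis distinct_card)
  also have "\<dots> \<le> card {1..m}" using assms(4) by (intro card_mono) auto
  finally have "length ixs \<le> m" using ij(1) by simp
  moreover have "set ixs \<subseteq> {1..n}" "set jxs \<subseteq> {1..m}" using ij(5,6) assms(4) by auto
  ultimately show ?thesis unfolding alignments_def using ij by blast
qed

lemma alignments_finite: "finite (alignments n m)"
proof -
  have "alignments n m \<subseteq> Pow ({1..n} \<times> {1..m})"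
  proof
    fix L assume "L \<in> alignments n m"
    then obtain ixs jxs where "L = set (zip ixs jxs)" "set ixs \<subseteq> {1..n}" "set jxs \<subseteq> {1..m}"
      unfolding alignments_def by blast
    thus "L \<in> Pow ({1..n} \<times> {1..m})" by (auto dest: set_zip_leftD set_zip_rightD)
  qed
  thus ?thesis by (rule finite_subset) simp
qed




context red begin

abbreviation "XX \<equiv> build_X \<sigma> \<rho> \<mu> k1 K Xs n"
abbreviation "YY \<equiv> build_Y \<sigma> \<rho> \<mu> k1 K Ys n m"

lemma len_XX: "length XX = (2*n-1)*K" unfolding X_form by (rule length_X)
lemma len_YY: "length YY = N" unfolding Y_map by simp

lemma lcsd_XY: "lcs_dist XX YY + 2 * LCS XX YY = length XX + length YY"
  unfolding lcs_dist_def using LCS_le1[of XX YY] LCS_le2[of XX YY] by arith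

lemma total_len: "length XX + length YY = 2*n*K + 2*(n-1)*K + m*(lx+ly) + 4*k1*m"
proof -
  have "length XX + length YY = (2*n-1)*K + (2*n*K + m*b + (m-1)*K)" using len_XX len_YY N_eq by simp
  also have "\<dots> = 2*n*K + 2*(n-1)*K + m*(lx+ly) + 4*k1*m"
  proof -
    obtain n' where n': "n = Suc n'" using n1 by (cases n) auto
    obtain m' where m': "m = Suc m'" using m1 by (cases m) auto
    show ?thesis unfolding n' m' b_def K_def by (simp add: algebra_simps)
  qed
  finally show ?thesis .
qed

lemma LL_le: "t < n \<Longrightarrow> j < m \<Longrightarrow> LL t j \<le> lx \<and> LL t j \<le> ly"
  unfolding LL_def using LCS_le1[of "Xs (t+1)" "Ys (j+1)"] LCS_le2[of "Xs (t+1)" "Ys (j+1)"]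
    Xlen[of "t+1"] Ylen[of "j+1"] by auto

lemma ld_LL: "t < n \<Longrightarrow> j < m \<Longrightarrow> lcs_dist (Xs (t+1)) (Ys (j+1)) + 2 * LL t j = lx + ly"
  unfolding lcs_dist_def using LL_le[of t j] Xlen[of "t+1"] Ylen[of "j+1"] unfolding LL_def by auto

lemma gamma_le: "gamma Xs Ys n m \<le> lx + ly"
proof -
  let ?G = "{lcs_dist (Xs i) (Ys j) | i j. i \<in> {1..n} \<and> j \<in> {1..m}}"
  have sub: "?G \<subseteq> {0..lx+ly}"
  proof
    fix x assume "x \<in> ?G"
    then obtain i j where ij: "i \<in> {1..n}" "j \<in> {1..m}" "x = lcs_dist (Xs i) (Ys j)" by blast
    thus "x \<in> {0..lx+ly}" unfolding lcs_dist_def using Xlen[OF ij(1)] Ylen[OF ij(2)] by auto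
  qed
  have fin: "finite ?G" by (rule finite_subset[OF sub]) simp
  have ne: "?G \<noteq> {}" using m1 n1 by auto
  show ?thesis unfolding gamma_def
  proof (rule Max.boundedI[OF fin ne])
    fix x assume "x \<in> ?G" hence "x \<in> {0..lx+ly}" using sub by blast
    thus "x \<le> lx + ly" by simp
  qed
qed

lemma gamma_le2K: "gamma Xs Ys n m \<le> 2*K"
  using gamma_le unfolding K_def k1_def by simp

lemma lower_main: "\<exists>L\<in>alignments n m. align_cost Xs Ys n m L + 2*n*K \<le> lcs_dist XX YY"
proof -
  obtain c where c: "mono c" "LCS XX YY = (\<Sum>t<n. gg c t) + (\<Sum>t<n-1. hh c t)" using cut_pieces by blast
  define Lm where "Lm = Lam c"
  define SL where "SL = (\<Sum>p\<in>Lm. LL (fst p) (snd p))"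
  define k where "k = card Lm"
  define \<gamma> where "\<gamma> = gamma Xs Ys n m"
  define h where "h = (\<lambda>p::nat\<times>nat. (fst p + 1, snd p + 1))"
  define L1 where "L1 = h ` Lm"
  let ?g = "\<lambda>(i,j). lcs_dist (Xs i) (Ys j)"
  have finLm: "finite Lm" unfolding Lm_def by (rule Lam_fin[OF c(1)])
  have Lsub: "\<And>p. p \<in> Lm \<Longrightarrow> fst p < n \<and> snd p < m" unfolding Lm_def by (rule Lam_sub[OF c(1)])
  have injh: "inj_on h Lm" unfolding h_def by (rule inj_onI) (auto simp: prod_eq_iff)
  have cardL1: "card L1 = k" unfolding L1_def k_def by (rule card_image[OF injh])
  have km: "k \<le> m"
  proof -
    have "k = card (snd ` Lm)" unfolding k_def Lm_def using card_image[OF Lam_snd_inj[OF c(1)]] by simp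
    also have "\<dots> \<le> card {..<m}" by (rule card_mono) (use Lsub in auto)
    finally show ?thesis by simp
  qed
  have TB: "LCS XX YY \<le> (n-1)*K + 2*k1*m + SL" unfolding SL_def Lm_def using total_bound[OF c(1)] c(2) by simp
  have chainL1: "\<forall>p\<in>L1. \<forall>q\<in>L1. fst p < fst q \<longrightarrow> snd p < snd q"
  proof (intro ballI impI)
    fix p q assume pq: "p \<in> L1" "q \<in> L1" "fst p < fst q"
    then obtain p' q' where "p' \<in> Lm" "q' \<in> Lm" "p = h p'" "q = h q'" unfolding L1_def by blast
    moreover obtain t j t' j' where "p' = (t,j)" "q' = (t',j')" by (cases p', cases q') 
    ultimately show "snd p < snd q" using pq(3) Lam_order[OF c(1), of t j t' j'] unfolding h_def Lm_def by auto
  qed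
  have injL1: "inj_on fst L1"
  proof (rule inj_onI)
    fix p q assume pq: "p \<in> L1" "q \<in> L1" "fst p = fst q"
    then obtain p' q' where pq': "p' \<in> Lm" "q' \<in> Lm" "p = h p'" "q = h q'" unfolding L1_def by blast
    hence "fst p' = fst q'" using pq(3) unfolding h_def by simp
    hence "p' = q'" using inj_onD[OF Lam_fst_inj[OF c(1)]] pq' unfolding Lm_def by blast
    thus "p = q" using pq' by simp
  qed
  have subL1: "L1 \<subseteq> {1..n} \<times> {1..m}"
  proof
    fix x assume "x \<in> L1"
    then obtain p where "p \<in> Lm" "x = h p" unfolding L1_def by blast
    thus "x \<in> {1..n} \<times> {1..m}" using Lsub[of p] unfolding h_def by auto
  qed
  have finL1: "finite L1" unfolding L1_def using finLm by simp
  have sumL1: "(\<Sum>x\<in>L1. ?g x) + 2*SL = k*(lx+ly)"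
  proof -
    have "(\<Sum>x\<in>L1. ?g x) = (\<Sum>p\<in>Lm. lcs_dist (Xs (fst p + 1)) (Ys (snd p + 1)))"
      unfolding L1_def sum.reindex[OF injh] by (simp add: h_def comp_def case_prod_beta)
    hence "(\<Sum>x\<in>L1. ?g x) + 2*SL = (\<Sum>p\<in>Lm. lcs_dist (Xs (fst p + 1)) (Ys (snd p + 1)) + 2 * LL (fst p) (snd p))"
      unfolding SL_def by (simp add: sum.distrib sum_distrib_left)
    also have "\<dots> = (\<Sum>p\<in>Lm. lx + ly)" by (rule sum.cong[OF refl]) (use Lsub ld_LL in auto)
    finally show ?thesis unfolding k_def by simp
  qed
  have main_id: "length XX + length YY = 2*n*K + 2*(n-1)*K + m*(lx+ly) + 4*k1*m" by (rule total_len)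
  have gle: "\<gamma> \<le> lx + ly" unfolding \<gamma>_def by (rule gamma_le)
  show ?thesis
  proof (cases "k < m \<or> \<not> m < Max (fst ` Lm) + 1 - Min (fst ` Lm)")
    case True
    have L1al: "L1 \<in> alignments n m" by (rule chain_in_alignments[OF finL1 chainL1 injL1 subL1])
    have pen: "(if card L1 < m then (m - card L1) * \<gamma> else (Max (fst ` L1) + 1 - Min (fst ` L1) - m) * \<gamma>) \<le> (m - k)*(lx+ly)"
    proof (cases "k < m")
      case True thus ?thesis using cardL1 gle by simp
    next
      case False
      hence km': "k = m" using km by simp
      hence nsp: "\<not> m < Max (fst ` Lm) + 1 - Min (fst ` Lm)" using True by simp
      have ne: "fst ` Lm \<noteq> {}" using km' m1 unfolding k_def by auto
      have fe: "fst ` L1 = Suc ` (fst ` Lm)" unfolding L1_def h_def by (auto simp: image_image)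
      have "Max (fst ` L1) = Suc (Max (fst ` Lm))" unfolding fe
        by (rule mono_Max_commute[symmetric]) (use finLm ne in \<open>auto simp: mono_def\<close>)
      moreover have "Min (fst ` L1) = Suc (Min (fst ` Lm))" unfolding fe
        by (rule mono_Min_commute[symmetric]) (use finLm ne in \<open>auto simp: mono_def\<close>)
      ultimately have "Max (fst ` L1) + 1 - Min (fst ` L1) - m = 0" using nsp by simp
      thus ?thesis using cardL1 km' by simp
    qed
    have "align_cost Xs Ys n m L1 = (\<Sum>x\<in>L1. ?g x) + (if card L1 < m then (m - card L1) * \<gamma> else (Max (fst ` L1) + 1 - Min (fst ` L1) - m) * \<gamma>)"
      unfolding align_cost_def \<gamma>_def by simp
    hence cst: "align_cost Xs Ys n m L1 \<le> (\<Sum>x\<in>L1. ?g x) + (m - k)*(lx+ly)" using pen by simp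
    have "k*(lx+ly) + (m-k)*(lx+ly) = m*(lx+ly)" using km by (simp add: add_mult_distrib[symmetric])
    hence "align_cost Xs Ys n m L1 + 2*n*K + 2 * LCS XX YY \<le> length XX + length YY"
      using cst sumL1 TB main_id by linarith
    hence "align_cost Xs Ys n m L1 + 2*n*K \<le> lcs_dist XX YY" using lcsd_XY by linarith
    thus ?thesis using L1al by blast
  next
    case False
    hence km': "k = m" and sp: "m < Max (fst ` Lm) + 1 - Min (fst ` Lm)" using km by auto
    have PB: "LCS XX YY + K \<le> (n-1)*K + 2*k1*m + SL"
      using penalty_bound[OF c(1)] km' sp c(2) unfolding k_def SL_def Lm_def by simp
    have ne: "Lm \<noteq> {}" using km' m1 unfolding k_def by auto
    then obtain p0 where p0: "p0 \<in> Lm" by blast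
    define L' where "L' = L1 - {h p0}"
    have hp0: "h p0 \<in> L1" unfolding L1_def using p0 by simp
    have L'al: "L' \<in> alignments n m"
    proof (rule chain_in_alignments)
      show "finite L'" unfolding L'_def using finL1 by simp
      show "\<forall>p\<in>L'. \<forall>q\<in>L'. fst p < fst q \<longrightarrow> snd p < snd q" using chainL1 unfolding L'_def by blast
      show "inj_on fst L'" unfolding L'_def using injL1 by (rule inj_on_subset) blast
      show "L' \<subseteq> {1..n} \<times> {1..m}" unfolding L'_def using subL1 by blast
    qed
    have cardL': "card L' = m - 1" unfolding L'_def using cardL1 km' hp0 finL1 by simp
    have "card L' < m" using cardL' m1 by simp
    hence "align_cost Xs Ys n m L' = (\<Sum>x\<in>L'. ?g x) + (m - (m-1)) * \<gamma>"
      unfolding align_cost_def \<gamma>_def using cardL' by simp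
    also have "m - (m-1) = 1" using m1 by simp
    finally have cst: "align_cost Xs Ys n m L' = (\<Sum>x\<in>L'. ?g x) + \<gamma>" by simp
    have "(\<Sum>x\<in>L1. ?g x) = ?g (h p0) + (\<Sum>x\<in>L'. ?g x)" unfolding L'_def by (rule sum.remove[OF finL1 hp0])
    hence sub': "(\<Sum>x\<in>L'. ?g x) \<le> (\<Sum>x\<in>L1. ?g x)" by simp
    have "k*(lx+ly) = m*(lx+ly)" using km' by simp
    have "\<gamma> \<le> 2*K" unfolding \<gamma>_def by (rule gamma_le2K)
    hence "align_cost Xs Ys n m L' + 2*n*K + 2 * LCS XX YY \<le> length XX + length YY"
      using cst sub' sumL1 PB main_id km' by simp
    hence "align_cost Xs Ys n m L' + 2*n*K \<le> lcs_dist XX YY" using lcsd_XY by linarith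
    thus ?thesis using L'al by blast
  qed
qed

end



context red begin

lemma upper_main:
  assumes "L \<in> structured_alignments n m"
  shows "lcs_dist XX YY \<le> align_cost Xs Ys n m L + 2*n*K"
proof -
  obtain \<Delta> where D: "\<Delta> \<le> n - m" "L = {(\<Delta> + k, k) | k. k \<in> {1..m}}"
    using assms unfolding structured_alignments_def by blast
  let ?g = "\<lambda>(i,j). lcs_dist (Xs i) (Ys j)"
  define f where "f = (\<lambda>r::nat. (\<Delta> + Suc r, Suc r))"
  have Lf: "L = f ` {..<m}"
  proof
    show "L \<subseteq> f ` {..<m}"
    proof
      fix x assume "x \<in> L"
      then obtain k where k: "x = (\<Delta> + k, k)" "k \<in> {1..m}" using D by blast
      hence "x = f (k - 1)" "k - 1 < m" unfolding f_def by auto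
      thus "x \<in> f ` {..<m}" by blast
    qed
    show "f ` {..<m} \<subseteq> L"
    proof
      fix x assume "x \<in> f ` {..<m}"
      then obtain r where r: "r < m" "x = f r" by blast
      hence "x = (\<Delta> + Suc r, Suc r)" "Suc r \<in> {1..m}" unfolding f_def by auto
      thus "x \<in> L" using D by blast
    qed
  qed
  have injf: "inj_on f {..<m}" unfolding f_def by (rule inj_onI) simp
  have cardL: "card L = m" unfolding Lf using card_image[OF injf] by simp
  have finL: "finite L" unfolding Lf by simp
  have neL: "L \<noteq> {}" using cardL m1 by auto
  have mxf: "Max (fst ` L) \<le> \<Delta> + m"
  proof (rule Max.boundedI)
    show "finite (fst ` L)" using finL by simp
    show "fst ` L \<noteq> {}" using neL by simp
    fix x assume "x \<in> fst ` L"
    thus "x \<le> \<Delta> + m" unfolding Lf f_def by auto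
  qed
  have mnf: "\<Delta> + 1 \<le> Min (fst ` L)"
  proof (rule Min.boundedI)
    show "finite (fst ` L)" using finL by simp
    show "fst ` L \<noteq> {}" using neL by simp
    fix x assume "x \<in> fst ` L"
    thus "\<Delta> + 1 \<le> x" unfolding Lf f_def by auto
  qed
  have pen0: "Max (fst ` L) + 1 - Min (fst ` L) - m = 0" using mxf mnf by simp
  have cost: "align_cost Xs Ys n m L = (\<Sum>x\<in>L. ?g x)"
    unfolding align_cost_def using cardL pen0 by simp
  define SLs where "SLs = (\<Sum>r<m. LL (\<Delta>+r) r)"
  have Dm: "\<Delta> + m \<le> n" using D(1) mn by simp
  have sumL: "(\<Sum>x\<in>L. ?g x) + 2*SLs = m*(lx+ly)"
  proof -
    have "(\<Sum>x\<in>L. ?g x) = (\<Sum>r<m. lcs_dist (Xs (\<Delta>+r+1)) (Ys (r+1)))"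
      unfolding Lf sum.reindex[OF injf] by (simp add: f_def comp_def)
    hence "(\<Sum>x\<in>L. ?g x) + 2*SLs = (\<Sum>r<m. lcs_dist (Xs (\<Delta>+r+1)) (Ys (r+1)) + 2 * LL (\<Delta>+r) r)"
      unfolding SLs_def by (simp add: sum.distrib sum_distrib_left)
    also have "\<dots> = (\<Sum>r<m. lx + ly)"
    proof (rule sum.cong[OF refl])
      fix r assume "r \<in> {..<m}"
      hence "\<Delta> + r < n" "r < m" using Dm by auto
      thus "lcs_dist (Xs (\<Delta>+r+1)) (Ys (r+1)) + 2 * LL (\<Delta>+r) r = lx + ly" by (rule ld_LL)
    qed
    finally show ?thesis by simp
  qed
  have SB: "(n-1)*K + 2*k1*m + SLs \<le> LCS XX YY" unfolding SLs_def by (rule struct_lower[OF Dm])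
  have "lcs_dist XX YY + 2 * LCS XX YY = 2*n*K + 2*(n-1)*K + m*(lx+ly) + 4*k1*m"
    using lcsd_XY total_len by simp
  thus ?thesis using SB sumL cost by linarith
qed

theorem red_main:
  "int (Min (align_cost Xs Ys n m ` alignments n m)) \<le> int (lcs_dist XX YY) - int (2*n*K)
   \<and> int (lcs_dist XX YY) - int (2*n*K) \<le> int (Min (align_cost Xs Ys n m ` structured_alignments n m))"
proof
  obtain L where L: "L \<in> alignments n m" "align_cost Xs Ys n m L + 2*n*K \<le> lcs_dist XX YY"
    using lower_main by blast
  have "Min (align_cost Xs Ys n m ` alignments n m) \<le> align_cost Xs Ys n m L"
    by (rule Min_le) (use L alignments_finite in auto)
  thus "int (Min (align_cost Xs Ys n m ` alignments n m)) \<le> int (lcs_dist XX YY) - int (2*n*K)"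
    using L(2) by linarith
next
  have fin: "finite (structured_alignments n m)" unfolding structured_alignments_def by simp
  have ne: "structured_alignments n m \<noteq> {}" unfolding structured_alignments_def by blast
  have "Min (align_cost Xs Ys n m ` structured_alignments n m) \<in> align_cost Xs Ys n m ` structured_alignments n m"
    by (rule Min_in) (use fin ne in auto)
  then obtain L where L: "L \<in> structured_alignments n m" "Min (align_cost Xs Ys n m ` structured_alignments n m) = align_cost Xs Ys n m L"
    by blast
  show "int (lcs_dist XX YY) - int (2*n*K) \<le> int (Min (align_cost Xs Ys n m ` structured_alignments n m))"
    using upper_main[OF L(1)] L(2) by linarith
qed

end



theorem mainTheorem7:
  fixes \<Sigma> :: "'a set" and Xs Ys :: "nat \<Rightarrow> 'a list"
    and \<sigma> \<rho> \<mu> :: 'a and n m lx ly :: nat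
  assumes "1 \<le> m" and "m \<le> n"
    and "\<And>i. i \<in> {1..n} \<Longrightarrow> length (Xs i) = lx \<and> set (Xs i) \<subseteq> \<Sigma>"
    and "\<And>j. j \<in> {1..m} \<Longrightarrow> length (Ys j) = ly \<and> set (Ys j) \<subseteq> \<Sigma>"
    and "\<sigma> \<notin> \<Sigma>" and "\<rho> \<notin> \<Sigma>" and "\<mu> \<notin> \<Sigma>"
    and "\<sigma> \<noteq> \<rho>" and "\<sigma> \<noteq> \<mu>" and "\<rho> \<noteq> \<mu>"
  shows "let \<kappa>1 = 4 * (lx + ly); \<kappa>2 = 2 * \<kappa>1 + lx;
             X = build_X \<sigma> \<rho> \<mu> \<kappa>1 \<kappa>2 Xs n;
             Y = build_Y \<sigma> \<rho> \<mu> \<kappa>1 \<kappa>2 Ys n m;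
             C = 2 * n * \<kappa>2
         in int (Min (align_cost Xs Ys n m ` alignments n m)) \<le> int (lcs_dist X Y) - int C
          \<and> int (lcs_dist X Y) - int C \<le> int (Min (align_cost Xs Ys n m ` structured_alignments n m))"
proof (cases "0 < lx + ly")
  case True
  interpret r: red \<Sigma> Xs Ys \<sigma> \<rho> \<mu> n m lx ly
    using assms True by unfold_locales auto
  show ?thesis using r.red_main unfolding Let_def r.K_def r.k1_def by simp
next
  case False
  hence z: "lx = 0" "ly = 0" by auto
  have Xe: "\<And>i. i \<in> {1..n} \<Longrightarrow> Xs i = []" using assms(3) z by auto
  have Ye: "\<And>j. j \<in> {1..m} \<Longrightarrow> Ys j = []" using assms(4) z by auto
  have G0: "\<And>S. Gpad \<sigma> \<rho> 0 S = S" unfolding Gpad_def by simp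
  have X: "build_X \<sigma> \<rho> \<mu> 0 0 Xs n = []"
  proof -
    have a: "Xs 1 = []" using Xe assms(1,2) by simp
    have b: "\<forall>i\<in>set [2..<n+1]. replicate 0 \<mu> @ Gpad \<sigma> \<rho> 0 (Xs i) = []"
    proof
      fix i assume "i \<in> set [2..<n+1]"
      hence "i \<in> {1..n}" by auto
      thus "replicate 0 \<mu> @ Gpad \<sigma> \<rho> 0 (Xs i) = []" using Xe G0 by simp
    qed
    show ?thesis unfolding build_X_def using a b by (simp add: G0 concat_eq_Nil_conv del: replicate_0)
  qed
  have Y: "build_Y \<sigma> \<rho> \<mu> 0 0 Ys n m = []"
  proof -
    have a: "Ys 1 = []" using Ye assms(1,2) by simp
    have b: "\<forall>j\<in>set [2..<m+1]. replicate 0 \<mu> @ Gpad \<sigma> \<rho> 0 (Ys j) = []"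
    proof
      fix j assume "j \<in> set [2..<m+1]"
      hence "j \<in> {1..m}" by auto
      thus "replicate 0 \<mu> @ Gpad \<sigma> \<rho> 0 (Ys j) = []" using Ye G0 by simp
    qed
    show ?thesis unfolding build_Y_def using a b by (simp add: G0 concat_eq_Nil_conv del: replicate_0)
  qed
  have ld0: "lcs_dist [] ([]::'a list) = 0" unfolding lcs_dist_def by simp
  have emp: "{} \<in> alignments n m" unfolding alignments_def
    by (rule CollectI, rule exI[of _ "[]"], rule exI[of _ "[]"]) simp
  let ?G = "{lcs_dist (Xs i) (Ys j) | i j. i \<in> {1..n} \<and> j \<in> {1..m}}"
  have Gs: "?G \<subseteq> {0}"
  proof
    fix x assume "x \<in> ?G"
    then obtain i j where ij: "i \<in> {1..n}" "j \<in> {1..m}" "x = lcs_dist (Xs i) (Ys j)" by blast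
    have "Xs i = []" by (rule Xe[OF ij(1)])
    moreover have "Ys j = []" by (rule Ye[OF ij(2)])
    ultimately show "x \<in> {0}" using ij(3) ld0 by simp
  qed
  have gam: "gamma Xs Ys n m = 0"
  proof -
    have fin: "finite ?G" using Gs by (rule finite_subset) simp
    have "lcs_dist (Xs 1) (Ys 1) \<in> ?G"
      by (rule CollectI, rule exI[of _ 1], rule exI[of _ 1]) (use assms(1,2) in simp)
    hence ne: "?G \<noteq> {}" by (metis empty_iff)
    have "gamma Xs Ys n m \<le> 0" unfolding gamma_def
    proof (rule Max.boundedI[OF fin ne])
      fix x assume "x \<in> ?G" hence "x \<in> {0}" by (rule subsetD[OF Gs])
      thus "x \<le> 0" by simp
    qed
    thus ?thesis by simp
  qed
  have c0: "align_cost Xs Ys n m {} = 0" unfolding align_cost_def gam by simp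
  have "Min (align_cost Xs Ys n m ` alignments n m) \<le> align_cost Xs Ys n m {}"
    by (rule Min_le[OF finite_imageI[OF alignments_finite] imageI[OF emp]])
  hence "Min (align_cost Xs Ys n m ` alignments n m) = 0" using c0 by simp
  thus ?thesis unfolding Let_def using z X Y ld0 by simp
qed


end
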